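(* Let $\mathcal{H}$ be a complex infinite-dimensional Hilbert space, let $n>1$ be an integer, and let $A\in B(\mathcal{H})$ satisfy $A^*A^n=A^nA^*$ (equivalently, $A^n$ is normal). Suppose $\sigma(A)$ is contained in an angle with vertex at the origin of width less than $\frac{2\pi}{n}$. Then for every non-zero $\lambda$ which is an isolated point of $\sigma(A)$, the Riesz projection $P_A(\lambda)$ is self-adjoint.
   Context: $B(\mathcal{H})$ denotes the algebra of bounded linear operators on $\mathcal{H}$. For $\lambda$ isolated in $\sigma(A)$, the Riesz projection is $P_A(\lambda)=\frac{1}{2\pi i}\int_\Gamma(\mu-A)^{-1}\,d\mu$, where $\Gamma$ is a positively oriented path enclosing $\lambda$ and separating it from the rest of $\sigma(A)$. *)

theory Defs
  imports "HOL-Complex_Analysis.Complex_Analysis"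
begin

text \<open>Complex Hilbert spaces (not available in the distribution): a real Banach space
  with a compatible complex scalar multiplication and a complex inner product,
  conjugate-linear in the first and linear in the second argument, inducing the norm.\<close>

class complex_hilbert = banach +
  fixes scaleC :: "complex \<Rightarrow> 'a \<Rightarrow> 'a" (infixr \<open>*\<^sub>C\<close> 75)
    and cinner :: "'a \<Rightarrow> 'a \<Rightarrow> complex"
  assumes scaleC_of_real: "complex_of_real r *\<^sub>C x = r *\<^sub>R x"
    and scaleC_add_right: "c *\<^sub>C (x + y) = c *\<^sub>C x + c *\<^sub>C y"
    and scaleC_add_left: "(b + c) *\<^sub>C x = b *\<^sub>C x + c *\<^sub>C x"
    and scaleC_scaleC: "b *\<^sub>C (c *\<^sub>C x) = (b * c) *\<^sub>C x"
    and cinner_conj: "cinner x y = cnj (cinner y x)"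
    and cinner_add_right: "cinner x (y + z) = cinner x y + cinner x z"
    and cinner_scaleC_right: "cinner x (c *\<^sub>C y) = c * cinner x y"
    and cinner_self_nonneg: "0 \<le> Re (cinner x x)"
    and norm_cinner: "norm x = sqrt (Re (cinner x x))"

definition infinite_dimensional :: "'a::complex_hilbert itself \<Rightarrow> bool" where
  "infinite_dimensional _ \<longleftrightarrow>
     \<not> (\<exists>S::'a set. finite S \<and> (\<forall>x. \<exists>c. x = (\<Sum>s\<in>S. c s *\<^sub>C s)))"

definition bounded_op :: "('a::complex_hilbert \<Rightarrow> 'a) \<Rightarrow> bool" where
  "bounded_op T \<longleftrightarrow> (\<forall>x y. T (x + y) = T x + T y) \<and> (\<forall>c x. T (c *\<^sub>C x) = c *\<^sub>C T x)
      \<and> (\<exists>K. \<forall>x. norm (T x) \<le> norm x * K)"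

definition cadjoint :: "('a::complex_hilbert \<Rightarrow> 'a) \<Rightarrow> ('a \<Rightarrow> 'a)" where
  "cadjoint T = (THE S. \<forall>x y. cinner (T x) y = cinner x (S y))"

definition invertible_op :: "('a::complex_hilbert \<Rightarrow> 'a) \<Rightarrow> bool" where
  "invertible_op T \<longleftrightarrow> (\<exists>B. bounded_op B \<and> B \<circ> T = id \<and> T \<circ> B = id)"

definition shift_op :: "complex \<Rightarrow> ('a::complex_hilbert \<Rightarrow> 'a) \<Rightarrow> ('a \<Rightarrow> 'a)" where
  "shift_op \<mu> A = (\<lambda>x. \<mu> *\<^sub>C x - A x)"

definition op_spectrum :: "('a::complex_hilbert \<Rightarrow> 'a) \<Rightarrow> complex set" where
  "op_spectrum A = {\<mu>. \<not> invertible_op (shift_op \<mu> A)}"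

definition resolvent :: "('a::complex_hilbert \<Rightarrow> 'a) \<Rightarrow> complex \<Rightarrow> ('a \<Rightarrow> 'a)" where
  "resolvent A \<mu> = (THE B. bounded_op B \<and> B \<circ> shift_op \<mu> A = id \<and> shift_op \<mu> A \<circ> B = id)"

text \<open>The Riesz projection (1/2\<pi>i) \<integral>_\<Gamma> (\<mu> - A)^{-1} d\<mu>, the operator-valued integral
  being taken in the weak sense: <y, P x> = (1/2\<pi>i) \<integral>_\<Gamma> <y, (\<mu>-A)^{-1} x> d\<mu>.\<close>
definition riesz_projection ::
  "('a::complex_hilbert \<Rightarrow> 'a) \<Rightarrow> (real \<Rightarrow> complex) \<Rightarrow> ('a \<Rightarrow> 'a)" where
  "riesz_projection A \<Gamma> = (\<lambda>x. THE v. \<forall>y.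
      cinner y v = contour_integral \<Gamma> (\<lambda>\<mu>. cinner y (resolvent A \<mu> x)) / (2 * pi * \<i>))"

definition riesz_contour :: "('a::complex_hilbert \<Rightarrow> 'a) \<Rightarrow> complex \<Rightarrow> (real \<Rightarrow> complex) \<Rightarrow> bool" where
  "riesz_contour A l \<Gamma> \<longleftrightarrow> valid_path \<Gamma> \<and> pathfinish \<Gamma> = pathstart \<Gamma>
     \<and> path_image \<Gamma> \<inter> op_spectrum A = {}
     \<and> winding_number \<Gamma> l = 1
     \<and> (\<forall>\<mu>\<in>op_spectrum A - {l}. winding_number \<Gamma> \<mu> = 0)"

definition self_adjoint_op :: "('a::complex_hilbert \<Rightarrow> 'a) \<Rightarrow> bool" where
  "self_adjoint_op T \<longleftrightarrow> (\<forall>x y. cinner (T x) y = cinner x (T y))"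

definition angle_sector :: "real \<Rightarrow> real \<Rightarrow> complex set" where
  "angle_sector \<theta> w = {z. z = 0 \<or> (\<exists>t. \<theta> \<le> t \<and> t \<le> \<theta> + w \<and> z = of_real (cmod z) * cis t)}"

end

theory Submission
  imports Defs
begin
section \<open>Hilbert space basics\<close>

lemma scaleC_one [simp]: "(1::complex) *\<^sub>C (x::'a::complex_hilbert) = x"
  using scaleC_of_real[of 1 x] by simp

lemma scaleC_zero_left [simp]: "(0::complex) *\<^sub>C (x::'a::complex_hilbert) = 0"
  using scaleC_of_real[of 0 x] by simp

lemma scaleC_zero_right [simp]: "c *\<^sub>C (0::'a::complex_hilbert) = 0"
  using scaleC_add_right[of c 0 0] by simp

lemma scaleC_minus_right: "c *\<^sub>C (- x) = - (c *\<^sub>C (x::'a::complex_hilbert))"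
  using scaleC_add_right[of c x "-x"] by (simp add: minus_unique)

lemma scaleC_diff_right: "c *\<^sub>C (x - y) = c *\<^sub>C x - c *\<^sub>C (y::'a::complex_hilbert)"
  using scaleC_add_right[of c x "-y"] scaleC_minus_right[of c y] by simp

lemma scaleC_minus_left: "(- c) *\<^sub>C (x::'a::complex_hilbert) = - (c *\<^sub>C x)"
  using scaleC_add_left[of c "-c" x] by (simp add: minus_unique)

lemma scaleC_diff_left: "(b - c) *\<^sub>C (x::'a::complex_hilbert) = b *\<^sub>C x - c *\<^sub>C x"
  using scaleC_add_left[of b "-c" x] scaleC_minus_left[of c x] by simp

lemma scaleC_sum_right: "c *\<^sub>C (\<Sum>i\<in>I. f i) = (\<Sum>i\<in>I. c *\<^sub>C (f i::'a::complex_hilbert))"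
  by (induction I rule: infinite_finite_induct) (auto simp: scaleC_add_right)

lemma scaleC_sum_left: "(\<Sum>i\<in>I. f i) *\<^sub>C (x::'a::complex_hilbert) = (\<Sum>i\<in>I. f i *\<^sub>C x)"
  by (induction I rule: infinite_finite_induct) (auto simp: scaleC_add_left)

lemma cinner_add_left: "cinner (x + y) z = cinner x z + cinner (y::'a::complex_hilbert) z"
  by (metis cinner_conj cinner_add_right complex_cnj_add)

lemma cinner_scaleC_left: "cinner (c *\<^sub>C x) y = cnj c * cinner (x::'a::complex_hilbert) y"
  by (metis cinner_conj cinner_scaleC_right complex_cnj_mult complex_cnj_cnj)

lemma cinner_zero_right [simp]: "cinner x (0::'a::complex_hilbert) = 0"
  using cinner_add_right[of x 0 0] by simp

lemma cinner_zero_left [simp]: "cinner (0::'a::complex_hilbert) x = 0"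
  using cinner_add_left[of 0 0 x] by simp

lemma cinner_minus_right: "cinner x (- y) = - cinner x (y::'a::complex_hilbert)"
  using cinner_add_right[of x y "-y"] by (simp add: minus_unique)

lemma cinner_minus_left: "cinner (- x) y = - cinner (x::'a::complex_hilbert) y"
  using cinner_add_left[of x "-x" y] by (simp add: minus_unique)

lemma cinner_diff_right: "cinner x (y - z) = cinner x y - cinner x (z::'a::complex_hilbert)"
  using cinner_add_right[of x y "-z"] cinner_minus_right[of x z] by simp

lemma cinner_diff_left: "cinner (x - y) z = cinner x z - cinner (y::'a::complex_hilbert) z"
  using cinner_add_left[of x "-y" z] cinner_minus_left[of y z] by simp

lemma cinner_sum_right: "cinner x (\<Sum>i\<in>I. f i) = (\<Sum>i\<in>I. cinner (x::'a::complex_hilbert) (f i))"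
  by (induction I rule: infinite_finite_induct) (auto simp: cinner_add_right)

lemma cinner_scaleR_right: "cinner x (r *\<^sub>R y) = of_real r * cinner x (y::'a::complex_hilbert)"
  by (metis cinner_scaleC_right scaleC_of_real)

lemma cinner_self_real: "cinner x x = complex_of_real ((norm (x::'a::complex_hilbert))\<^sup>2)"
proof -
  have "Im (cinner x x) = Im (cnj (cinner x x))" by (rule arg_cong[where f=Im, OF cinner_conj])
  then have "Im (cinner x x) = 0" by simp
  moreover have "Re (cinner x x) = (norm x)\<^sup>2" using norm_cinner[of x] cinner_self_nonneg[of x] by simp
  ultimately show ?thesis by (simp add: complex_eq_iff)
qed

lemma cinner_self_eq_0: "cinner x x = 0 \<longleftrightarrow> (x::'a::complex_hilbert) = 0"
  by (simp add: cinner_self_real)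

lemma cinner_eq_0I: "(\<And>y. cinner y x = 0) \<Longrightarrow> (x::'a::complex_hilbert) = 0"
  using cinner_self_eq_0 by blast

lemma cinner_ext: "(\<And>y. cinner y x = cinner y z) \<Longrightarrow> (x::'a::complex_hilbert) = z"
  using cinner_eq_0I[of "x - z"] by (simp add: cinner_diff_right)

lemma cinner_ext_left: "(\<And>y. cinner x y = cinner z y) \<Longrightarrow> (x::'a::complex_hilbert) = z"
proof (rule cinner_ext)
  fix y assume h: "\<And>y. cinner x y = cinner z y"
  show "cinner y x = cinner y z" using h[of y] cinner_conj[of y x] cinner_conj[of y z] by simp
qed

lemma norm_sq_cinner: "(norm (x::'a::complex_hilbert))\<^sup>2 = Re (cinner x x)"
  using cinner_self_real[of x] by simp

lemma norm_scaleC [simp]: "norm (c *\<^sub>C x) = cmod c * norm (x::'a::complex_hilbert)"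
proof -
  have "(norm (c *\<^sub>C x))\<^sup>2 = Re (cinner (c *\<^sub>C x) (c *\<^sub>C x))" by (rule norm_sq_cinner)
  also have "\<dots> = Re (cnj c * (c * cinner x x))" by (simp only: cinner_scaleC_left cinner_scaleC_right ac_simps)
  also have "cnj c * (c * cinner x x) = of_real ((cmod c)\<^sup>2 * (norm x)\<^sup>2)"
  proof -
    have e: "cnj c * c = of_real ((cmod c)\<^sup>2)" by (metis complex_norm_square mult.commute of_real_power)
    have "cnj c * (c * cinner x x) = (cnj c * c) * cinner x x" by (simp add: mult.assoc)
    also have "\<dots> = of_real ((cmod c)\<^sup>2) * of_real ((norm x)\<^sup>2)" by (simp only: e cinner_self_real)
    finally show ?thesis by simp
  qed
  finally have "(norm (c *\<^sub>C x))\<^sup>2 = (cmod c * norm x)\<^sup>2" by (simp add: power_mult_distrib)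
  then show ?thesis by (simp add: power2_eq_iff_nonneg)
qed

lemma Cauchy_Schwarz_cinner: "cmod (cinner x y) \<le> norm (x::'a::complex_hilbert) * norm y"
proof (cases "y = 0")
  case True then show ?thesis by simp
next
  case False
  define t where "t = cinner y x / cinner y y"
  have yy: "cinner y y = of_real ((norm y)\<^sup>2)" by (rule cinner_self_real)
  have ny: "norm y > 0" using False by simp
  have "0 \<le> Re (cinner (x - t *\<^sub>C y) (x - t *\<^sub>C y))" by (rule cinner_self_nonneg)
  also have "cinner (x - t *\<^sub>C y) (x - t *\<^sub>C y)
      = cinner x x - t * cinner x y - cnj t * cinner y x + cnj t * t * cinner y y"
    by (simp add: cinner_diff_left cinner_diff_right cinner_scaleC_left cinner_scaleC_right algebra_simps)
  also have "t * cinner x y = cnj t * cinner y x"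
    unfolding t_def yy by (subst (2) cinner_conj) (simp add: mult.commute)
  also have "cnj t * t * cinner y y = cnj t * cinner y x"
  proof -
    have "t * cinner y y = cinner y x" using yy ny unfolding t_def by simp
    then show ?thesis by (simp add: mult.assoc)
  qed
  also have "cnj t * cinner y x = of_real ((cmod (cinner x y))\<^sup>2 / (norm y)\<^sup>2)"
  proof -
    have "cnj t * cinner y x = cnj (cinner y x) * cinner y x / of_real ((norm y)\<^sup>2)"
      unfolding t_def yy by simp
    also have "cnj (cinner y x) * cinner y x = of_real ((cmod (cinner y x))\<^sup>2)"
      by (metis complex_norm_square mult.commute of_real_power)
    also have "cmod (cinner y x) = cmod (cinner x y)" by (metis cinner_conj complex_mod_cnj)
    finally show ?thesis by simp
  qed
  finally have "0 \<le> (norm x)\<^sup>2 - (cmod (cinner x y))\<^sup>2 / (norm y)\<^sup>2"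
    by (simp add: cinner_self_real)
  then have "(cmod (cinner x y))\<^sup>2 \<le> (norm x * norm y)\<^sup>2"
    using ny by (simp add: field_simps power_mult_distrib)
  then show ?thesis by (simp add: power2_le_iff_abs_le)
qed

lemma bounded_linear_cinner_right: "bounded_linear (cinner (y::'a::complex_hilbert))"
proof
  show "cinner y (a + b) = cinner y a + cinner y b" for a b by (rule cinner_add_right)
  show "cinner y (r *\<^sub>R a) = r *\<^sub>R cinner y a" for r a by (simp add: cinner_scaleR_right scaleR_conv_of_real)
  show "\<exists>K. \<forall>x. norm (cinner y x) \<le> norm x * K"
    by (rule exI[of _ "norm y"]) (metis Cauchy_Schwarz_cinner mult.commute)
qed

lemma bounded_linear_scaleC: "bounded_linear (\<lambda>x::'a::complex_hilbert. c *\<^sub>C x)"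
proof
  show "c *\<^sub>C (a + b) = c *\<^sub>C a + c *\<^sub>C b" for a b by (rule scaleC_add_right)
  show "c *\<^sub>C (r *\<^sub>R a) = r *\<^sub>R (c *\<^sub>C a)" for r a
    by (metis mult.commute scaleC_of_real scaleC_scaleC)
  show "\<exists>K. \<forall>x. norm (c *\<^sub>C x) \<le> norm x * K"
    by (rule exI[of _ "cmod c"]) (simp add: mult.commute)
qed

lemma scaleC_cancel: "c \<noteq> 0 \<Longrightarrow> c *\<^sub>C x = c *\<^sub>C y \<Longrightarrow> (x::'a::complex_hilbert) = y"
  by (metis scaleC_one scaleC_scaleC field_class.field_inverse mult.commute)

definition clin :: "('a::complex_hilbert \<Rightarrow> 'a) \<Rightarrow> bool" where
  "clin T \<longleftrightarrow> (\<forall>x y. T (x + y) = T x + T y) \<and> (\<forall>c x. T (c *\<^sub>C x) = c *\<^sub>C T x)"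

lemma clin_add: "clin T \<Longrightarrow> T (x + y) = T x + T y"
  unfolding clin_def by blast

lemma clin_scale: "clin T \<Longrightarrow> T (c *\<^sub>C x) = c *\<^sub>C T x"
  unfolding clin_def by blast

lemma clin_zero: "clin T \<Longrightarrow> T 0 = 0"
  using clin_add[of T 0 0] by simp

lemma clin_minus: "clin T \<Longrightarrow> T (- x) = - T x"
  using clin_add[of T x "-x"] clin_zero[of T] by (simp add: minus_unique)

lemma clin_diff: "clin T \<Longrightarrow> T (x - y) = T x - T y"
  using clin_add[of T x "-y"] clin_minus[of T y] by simp

lemma clin_sum: "clin T \<Longrightarrow> T (\<Sum>i\<in>I. f i) = (\<Sum>i\<in>I. T (f i))"
  by (induction I rule: infinite_finite_induct) (auto simp: clin_add clin_zero)

lemma clin_id: "clin (\<lambda>x. x)"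
  unfolding clin_def by simp

lemma clin_comp: "clin S \<Longrightarrow> clin T \<Longrightarrow> clin (\<lambda>x. S (T x))"
  unfolding clin_def by simp

lemma clin_funpow: "clin T \<Longrightarrow> clin (T ^^ k)"
proof (induction k)
  case 0 then show ?case using clin_id by simp
next
  case (Suc k) then show ?case using clin_comp[of T "T ^^ k"] by (simp add: o_def)
qed

lemma bounded_op_clin: "bounded_op T \<Longrightarrow> clin T"
  unfolding bounded_op_def clin_def by blast

lemma bounded_op_bound: "bounded_op T \<Longrightarrow> \<exists>K>0. \<forall>x. norm (T x) \<le> K * norm x"
proof -
  assume "bounded_op T"
  then obtain K where K: "\<And>x. norm (T x) \<le> norm x * K" unfolding bounded_op_def by blast
  show ?thesis
  proof (rule exI[of _ "max K 1"], intro conjI allI)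
    fix x show "norm (T x) \<le> max K 1 * norm x"
      using K[of x] by (smt (verit) mult.commute mult_right_mono norm_ge_zero)
  qed simp
qed

lemma bounded_opI: "clin T \<Longrightarrow> (\<And>x. norm (T x) \<le> K * norm x) \<Longrightarrow> bounded_op T"
  unfolding bounded_op_def clin_def by (metis mult.commute)

lemma bounded_op_bounded_linear: "bounded_op T \<Longrightarrow> bounded_linear T"
proof -
  assume T: "bounded_op T"
  then have c: "clin T" by (rule bounded_op_clin)
  obtain K where K: "\<And>x. norm (T x) \<le> norm x * K" using T unfolding bounded_op_def by blast
  show ?thesis
  proof
    show "T (a + b) = T a + T b" for a b by (rule clin_add[OF c])
    show "T (r *\<^sub>R a) = r *\<^sub>R T a" for r a
      using clin_scale[OF c, of "complex_of_real r" a] by (simp add: scaleC_of_real)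
    show "\<exists>K. \<forall>x. norm (T x) \<le> norm x * K" using K by blast
  qed
qed

lemma bounded_op_comp: "bounded_op S \<Longrightarrow> bounded_op T \<Longrightarrow> bounded_op (\<lambda>x. S (T x))"
proof -
  assume S: "bounded_op S" and T: "bounded_op T"
  obtain K1 where K1: "K1 > 0" "\<And>x. norm (S x) \<le> K1 * norm x" using bounded_op_bound[OF S] by blast
  obtain K2 where K2: "K2 > 0" "\<And>x. norm (T x) \<le> K2 * norm x" using bounded_op_bound[OF T] by blast
  show ?thesis
  proof (rule bounded_opI[where K="K1 * K2"])
    show "clin (\<lambda>x. S (T x))" using clin_comp bounded_op_clin S T by blast
    fix x
    have "norm (S (T x)) \<le> K1 * norm (T x)" by (rule K1(2))
    also have "\<dots> \<le> K1 * (K2 * norm x)" using K1(1) K2(2)[of x] by simp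
    finally show "norm (S (T x)) \<le> K1 * K2 * norm x" by (simp add: mult.assoc)
  qed
qed

lemma bounded_op_id: "bounded_op (\<lambda>x. x)"
  by (rule bounded_opI[OF clin_id, where K=1]) simp

lemma bounded_op_funpow: "bounded_op T \<Longrightarrow> bounded_op (T ^^ k)"
proof (induction k)
  case 0 then show ?case using bounded_op_id by (simp add: id_def)
next
  case (Suc k) then show ?case using bounded_op_comp[of T "T ^^ k"] by (simp add: o_def)
qed

lemma bounded_op_shift: "bounded_op A \<Longrightarrow> bounded_op (shift_op \<mu> A)"
proof -
  assume A: "bounded_op A"
  obtain K where K: "K > 0" "\<And>x. norm (A x) \<le> K * norm x" using bounded_op_bound[OF A] by blast
  show ?thesis
  proof (rule bounded_opI[where K="cmod \<mu> + K"])
    show "clin (shift_op \<mu> A)" unfolding clin_def shift_op_def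
      using bounded_op_clin[OF A] by (simp add: clin_add clin_scale scaleC_add_right scaleC_scaleC
          scaleC_diff_right mult.commute)
    fix x
    have "norm (shift_op \<mu> A x) \<le> norm (\<mu> *\<^sub>C x) + norm (A x)" unfolding shift_op_def by (rule norm_triangle_ineq4)
    also have "\<dots> \<le> cmod \<mu> * norm x + K * norm x" using K(2)[of x] by simp
    finally show "norm (shift_op \<mu> A x) \<le> (cmod \<mu> + K) * norm x" by (simp add: distrib_right)
  qed
qed

section \<open>Riesz representation\<close>

lemma parallelogram_cinner:
  "(norm (x + y))\<^sup>2 + (norm (x - y))\<^sup>2 = 2 * (norm (x::'a::complex_hilbert))\<^sup>2 + 2 * (norm y)\<^sup>2"
  unfolding norm_sq_cinner
  by (simp add: cinner_add_left cinner_add_right cinner_diff_left cinner_diff_right)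

lemma infdist_approx:
  assumes "A \<noteq> {}" "e > 0"
  shows "\<exists>a\<in>A. dist x a < infdist x A + e"
proof (rule ccontr)
  assume "\<not> ?thesis"
  then have "\<forall>a\<in>A. infdist x A + e \<le> dist x a" by force
  then have "infdist x A + e \<le> infdist x A"
    unfolding infdist_notempty[OF assms(1)] by (intro cINF_greatest assms(1)) auto
  then show False using assms(2) by simp
qed

lemma riesz_rep:
  fixes \<phi> :: "'a::complex_hilbert \<Rightarrow> complex"
  assumes add: "\<And>x y. \<phi> (x + y) = \<phi> x + \<phi> y"
    and sc: "\<And>c x. \<phi> (c *\<^sub>C x) = c * \<phi> x"
    and bd: "\<And>x. cmod (\<phi> x) \<le> K * norm x"
  shows "\<exists>v. \<forall>x. \<phi> x = cinner v x"
proof (cases "\<forall>x. \<phi> x = 0")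
  case True then show ?thesis by (intro exI[of _ 0]) simp
next
  case False
  then obtain x0 where x0: "\<phi> x0 \<noteq> 0" by blast
  define Z where "Z = {x. \<phi> x = 0}"
  have bl: "bounded_linear \<phi>"
  proof
    show "\<phi> (a + b) = \<phi> a + \<phi> b" for a b by (rule add)
    show "\<phi> (r *\<^sub>R a) = r *\<^sub>R \<phi> a" for r a
      using sc[of "complex_of_real r" a] by (simp add: scaleC_of_real scaleR_conv_of_real)
    show "\<exists>K. \<forall>x. cmod (\<phi> x) \<le> norm x * K" using bd by (metis mult.commute)
  qed
  have phi0: "\<phi> 0 = 0" using add[of 0 0] by simp
  have phim: "\<phi> (x - y) = \<phi> x - \<phi> y" for x y
    using add[of "x - y" y] by simp
  have closedZ: "closed Z" unfolding Z_def
    by (intro closed_Collect_eq continuous_on_const linear_continuous_on bl)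
  have Z0: "0 \<in> Z" unfolding Z_def using phi0 by simp
  have Zadd: "a + b \<in> Z" if "a \<in> Z" "b \<in> Z" for a b using that add unfolding Z_def by simp
  have Zsc: "c *\<^sub>C a \<in> Z" if "a \<in> Z" for a c using that sc unfolding Z_def by simp
  define d where "d = infdist x0 Z"
  have d0: "d \<ge> 0" unfolding d_def by (rule infdist_nonneg)
  have dle: "d \<le> norm (x0 - k)" if "k \<in> Z" for k
    unfolding d_def using infdist_le[OF that, of x0] by (simp add: dist_norm)
  define e :: "nat \<Rightarrow> real" where "e m = inverse (real (Suc m))" for m
  have e_pos: "e m > 0" for m unfolding e_def by simp
  have e_le1: "e m \<le> 1" for m unfolding e_def by (simp add: field_simps)
  have "\<forall>m. \<exists>k\<in>Z. norm (x0 - k) < d + e m"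
    using infdist_approx[OF _ e_pos, of Z x0] Z0 unfolding d_def by (auto simp: dist_norm)
  then obtain k where kZ: "\<And>m. k m \<in> Z" and kd: "\<And>m. norm (x0 - k m) < d + e m"
    by metis
  have est: "(norm (k m - k p))\<^sup>2 \<le> (4 * d + 2) * (e m + e p)" for m p
  proof -
    define a where "a = x0 - k m"
    define b where "b = x0 - k p"
    have "complex_of_real (1/2) *\<^sub>C (k m + k p) \<in> Z" by (rule Zsc[OF Zadd[OF kZ kZ]])
    then have mid: "(1/2::real) *\<^sub>R (k m + k p) \<in> Z" by (simp only: scaleC_of_real)
    have "a + b = 2 *\<^sub>R (x0 - (1/2::real) *\<^sub>R (k m + k p))"
      unfolding a_def b_def by (simp add: algebra_simps scaleR_2)
    then have "norm (a + b) = 2 * norm (x0 - (1/2::real) *\<^sub>R (k m + k p))" by simp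
    then have ab: "norm (a + b) \<ge> 2 * d" using dle[OF mid] by simp
    have "(norm (k m - k p))\<^sup>2 = (norm (a - b))\<^sup>2"
      unfolding a_def b_def by (simp add: norm_minus_commute)
    also have "\<dots> = 2 * (norm a)\<^sup>2 + 2 * (norm b)\<^sup>2 - (norm (a + b))\<^sup>2"
      using parallelogram_cinner[of a b] by simp
    also have "\<dots> \<le> 2 * (d + e m)\<^sup>2 + 2 * (d + e p)\<^sup>2 - (2 * d)\<^sup>2"
    proof -
      have "norm a \<le> d + e m" using kd[of m] unfolding a_def by simp
      then have 1: "(norm a)\<^sup>2 \<le> (d + e m)\<^sup>2" by (simp add: power_mono)
      have "norm b \<le> d + e p" using kd[of p] unfolding b_def by simp
      then have 2: "(norm b)\<^sup>2 \<le> (d + e p)\<^sup>2" by (simp add: power_mono)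
      have 3: "(2 * d)\<^sup>2 \<le> (norm (a + b))\<^sup>2" using ab d0 by (intro power_mono) auto
      show ?thesis using 1 2 3 by linarith
    qed
    also have "\<dots> = 4 * d * e m + 2 * (e m)\<^sup>2 + 4 * d * e p + 2 * (e p)\<^sup>2"
      by (simp add: power2_eq_square algebra_simps)
    also have "\<dots> \<le> (4 * d + 2) * (e m + e p)"
    proof -
      have "(e m)\<^sup>2 \<le> e m" using e_pos[of m] e_le1[of m] by (simp add: power2_eq_square mult_le_cancel_left1)
      moreover have "(e p)\<^sup>2 \<le> e p" using e_pos[of p] e_le1[of p] by (simp add: power2_eq_square mult_le_cancel_left1)
      ultimately show ?thesis by (simp add: algebra_simps)
    qed
    finally show ?thesis .
  qed
  have "Cauchy k"
  proof (rule CauchyI)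
    fix eps :: real assume eps: "eps > 0"
    obtain M :: nat where M: "2 * (4 * d + 2) / eps\<^sup>2 < real M"
      using reals_Archimedean2 by blast
    show "\<exists>M. \<forall>m\<ge>M. \<forall>n\<ge>M. norm (k m - k n) < eps"
    proof (intro exI[of _ M] allI impI)
      fix m p assume mM: "m \<ge> M" and pM: "p \<ge> M"
      have em: "e m \<le> inverse (real (Suc M))" unfolding e_def using mM by (simp add: field_simps)
      have ep: "e p \<le> inverse (real (Suc M))" unfolding e_def using pM by (simp add: field_simps)
      have "(norm (k m - k p))\<^sup>2 \<le> (4 * d + 2) * (e m + e p)" by (rule est)
      also have "\<dots> \<le> (4 * d + 2) * (2 * inverse (real (Suc M)))"
        using em ep d0 by (intro mult_left_mono) auto
      also have "\<dots> < eps\<^sup>2"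
      proof -
        have "2 * (4 * d + 2) < eps\<^sup>2 * real (Suc M)"
          using M eps by (simp add: field_simps) (smt (verit) zero_less_power)
        then show ?thesis by (simp add: field_simps)
      qed
      finally have "(norm (k m - k p))\<^sup>2 < eps\<^sup>2" .
      then show "norm (k m - k p) < eps" using eps by (simp add: power_less_imp_less_base)
    qed
  qed
  then obtain k0 where klim: "k \<longlonglongrightarrow> k0"
    using Cauchy_convergent_iff convergent_def by blast
  have k0Z: "k0 \<in> Z" using closed_sequentially[OF closedZ] kZ klim by blast
  have "norm (x0 - k0) \<le> d"
  proof (rule LIMSEQ_le)
    show "(\<lambda>m. norm (x0 - k m)) \<longlonglongrightarrow> norm (x0 - k0)"
      by (intro tendsto_intros klim)
    show "(\<lambda>m. d + e m) \<longlonglongrightarrow> d"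
      unfolding e_def using tendsto_add[OF tendsto_const LIMSEQ_inverse_real_of_nat, of d] by simp
    show "\<exists>N. \<forall>n\<ge>N. norm (x0 - k n) \<le> d + e n" using kd less_imp_le by blast
  qed
  define z where "z = x0 - k0"
  have zmin: "norm z \<le> norm (z - t *\<^sub>C w)" if "w \<in> Z" for t w
  proof -
    have "k0 + t *\<^sub>C w \<in> Z" using Zadd[OF k0Z Zsc[OF that]] .
    then have "d \<le> norm (x0 - (k0 + t *\<^sub>C w))" by (rule dle)
    then show ?thesis using \<open>norm (x0 - k0) \<le> d\<close> unfolding z_def by (simp add: algebra_simps)
  qed
  have phiz: "\<phi> z = \<phi> x0" unfolding z_def phim using k0Z unfolding Z_def by simp
  have zne: "z \<noteq> 0" using phiz x0 phi0 by auto
  have orth: "cinner z w = 0" if "w \<in> Z" for w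
  proof -
    define a where "a = cinner z w"
    define eps where "eps = inverse ((norm w)\<^sup>2 + 1)"
    have eps: "eps > 0" unfolding eps_def by (simp add: add_nonneg_pos)
    define t where "t = complex_of_real eps * cnj a"
    have aa: "a * cnj a = complex_of_real ((cmod a)\<^sup>2)" by (rule complex_norm_square[symmetric])
    have wz: "cinner w z = cnj a" unfolding a_def by (rule cinner_conj)
    have "cinner (z - t *\<^sub>C w) (z - t *\<^sub>C w)
        = cinner z z - t * cinner z w - cnj t * cinner w z + cnj t * t * cinner w w"
      by (simp add: cinner_diff_left cinner_diff_right cinner_scaleC_left cinner_scaleC_right algebra_simps)
    also have "\<dots> = cinner z z - t * a - cnj t * cnj a + cnj t * t * cinner w w"
      by (simp only: a_def[symmetric] wz)
    also have "\<dots> = cinner z z - of_real eps * (a * cnj a) - of_real eps * (a * cnj a)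
        + of_real eps * of_real eps * (a * cnj a) * cinner w w"
      unfolding t_def by (simp add: algebra_simps)
    also have "\<dots> = cinner z z - of_real eps * of_real ((cmod a)\<^sup>2) - of_real eps * of_real ((cmod a)\<^sup>2)
        + of_real eps * of_real eps * of_real ((cmod a)\<^sup>2) * of_real ((norm w)\<^sup>2)"
      by (simp only: aa cinner_self_real[of w])
    also have "\<dots> = cinner z z - complex_of_real (2 * eps * (cmod a)\<^sup>2)
        + complex_of_real (eps\<^sup>2 * (cmod a)\<^sup>2 * (norm w)\<^sup>2)"
      by (simp add: power2_eq_square algebra_simps)
    finally have "(norm (z - t *\<^sub>C w))\<^sup>2 = (norm z)\<^sup>2 - 2 * eps * (cmod a)\<^sup>2 + eps\<^sup>2 * (cmod a)\<^sup>2 * (norm w)\<^sup>2"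
      unfolding norm_sq_cinner by (simp add: cinner_self_real)
    moreover have "(norm z)\<^sup>2 \<le> (norm (z - t *\<^sub>C w))\<^sup>2"
      using zmin[OF that, of t] by (simp add: power_mono)
    ultimately have "2 * eps * (cmod a)\<^sup>2 \<le> eps\<^sup>2 * (cmod a)\<^sup>2 * (norm w)\<^sup>2" by linarith
    then have "2 * (cmod a)\<^sup>2 \<le> eps * (cmod a)\<^sup>2 * (norm w)\<^sup>2"
      using eps by (simp add: power2_eq_square mult.assoc mult_le_cancel_left_pos)
    also have "eps * (cmod a)\<^sup>2 * (norm w)\<^sup>2 = (cmod a)\<^sup>2 * ((norm w)\<^sup>2 / ((norm w)\<^sup>2 + 1))"
      unfolding eps_def by (simp add: field_simps)
    also have "\<dots> \<le> (cmod a)\<^sup>2 * 1"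
    proof (intro mult_left_mono)
      have "(norm w)\<^sup>2 \<le> (norm w)\<^sup>2 + 1" by simp
      then show "(norm w)\<^sup>2 / ((norm w)\<^sup>2 + 1) \<le> 1"
        by (subst divide_le_eq_1_pos) (auto simp: add_nonneg_pos)
    qed simp
    finally have "(cmod a)\<^sup>2 \<le> 0" by simp
    then show ?thesis unfolding a_def by simp
  qed
  define v where "v = (cnj (\<phi> z) / complex_of_real ((norm z)\<^sup>2)) *\<^sub>C z"
  show ?thesis
  proof (intro exI[of _ v] allI)
    fix x
    have "x - (\<phi> x / \<phi> z) *\<^sub>C z \<in> Z" unfolding Z_def using phiz x0
      by (simp add: phim sc)
    then have "cinner z (x - (\<phi> x / \<phi> z) *\<^sub>C z) = 0" by (rule orth)
    then have zx: "cinner z x = (\<phi> x / \<phi> z) * complex_of_real ((norm z)\<^sup>2)"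
      by (simp add: cinner_diff_right cinner_scaleC_right cinner_self_real)
    have "cinner v x = \<phi> z / complex_of_real ((norm z)\<^sup>2) * cinner z x"
      unfolding v_def by (simp add: cinner_scaleC_left)
    also have "\<dots> = \<phi> x" unfolding zx using zne phiz x0 by (simp add: field_simps)
    finally show "\<phi> x = cinner v x" by simp
  qed
qed

lemma adjoint_exists:
  assumes "bounded_op (T::'a::complex_hilbert \<Rightarrow> 'a)"
  shows "\<exists>S. \<forall>x y. cinner (T x) y = cinner x (S y)"
proof -
  obtain K where K: "K > 0" "\<And>x. norm (T x) \<le> K * norm x" using bounded_op_bound[OF assms] by blast
  have c: "clin T" using assms by (rule bounded_op_clin)
  have "\<forall>y. \<exists>v. \<forall>x. cinner (T x) y = cinner x v"
  proof
    fix y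
    have "\<exists>v. \<forall>x. cinner y (T x) = cinner v x"
    proof (rule riesz_rep[where K="norm y * K"])
      show "cinner y (T (a + b)) = cinner y (T a) + cinner y (T b)" for a b
        by (simp add: clin_add[OF c] cinner_add_right)
      show "cinner y (T (s *\<^sub>C a)) = s * cinner y (T a)" for s a
        by (simp add: clin_scale[OF c] cinner_scaleC_right)
      show "cmod (cinner y (T a)) \<le> norm y * K * norm a" for a
        using Cauchy_Schwarz_cinner[of y "T a"] K(2)[of a]
        by (metis (no_types, opaque_lifting) mult.assoc mult_left_mono norm_ge_zero order_trans)
    qed
    then obtain v where v: "\<And>x. cinner y (T x) = cinner v x" by blast
    show "\<exists>v. \<forall>x. cinner (T x) y = cinner x v"
      by (intro exI[of _ v] allI) (metis cinner_conj v)
  qed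
  then show ?thesis by metis
qed

lemma cadjoint_prop:
  assumes "bounded_op (T::'a::complex_hilbert \<Rightarrow> 'a)"
  shows "cinner (T x) y = cinner x (cadjoint T y)"
proof -
  obtain S where S: "\<forall>x y. cinner (T x) y = cinner x (S y)" using adjoint_exists[OF assms] by blast
  have "\<exists>!S. \<forall>x y. cinner (T x) y = cinner x (S y)"
  proof (rule ex1I[of _ S])
    show "\<forall>x y. cinner (T x) y = cinner x (S y)" by (rule S)
    fix S' assume S': "\<forall>x y. cinner (T x) y = cinner x (S' y)"
    show "S' = S"
    proof
      fix y show "S' y = S y" by (rule cinner_ext) (metis S S' cinner_conj)
    qed
  qed
  then have "\<forall>x y. cinner (T x) y = cinner x (cadjoint T y)"
    unfolding cadjoint_def by (rule theI')
  then show ?thesis by blast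
qed

lemma adjoint_clin:
  assumes "\<And>x y. cinner (T x) y = cinner x (S y)"
  shows "clin (S::'a::complex_hilbert \<Rightarrow> 'a)"
  unfolding clin_def
proof (intro conjI allI)
  fix a b show "S (a + b) = S a + S b"
    by (rule cinner_ext) (metis assms cinner_conj cinner_add_left cinner_add_right)
next
  fix c a show "S (c *\<^sub>C a) = c *\<^sub>C S a"
    by (rule cinner_ext) (metis assms cinner_conj cinner_scaleC_left cinner_scaleC_right complex_cnj_cnj complex_cnj_mult)
qed

lemma adjoint_funpow:
  fixes T S :: "'a::complex_hilbert \<Rightarrow> 'a"
  assumes "\<And>x y. cinner (T x) y = cinner x (S y)"
  shows "cinner ((T ^^ k) x) y = cinner x ((S ^^ k) y)"
proof (induction k arbitrary: y)
  case 0 show ?case by simp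
next
  case (Suc k)
  have "cinner ((T ^^ Suc k) x) y = cinner (T ((T ^^ k) x)) y" by simp
  also have "\<dots> = cinner ((T ^^ k) x) (S y)" by (rule assms)
  also have "\<dots> = cinner x ((S ^^ k) (S y))" by (rule Suc)
  also have "(S ^^ k) (S y) = (S ^^ Suc k) y" by (simp add: funpow_swap1)
  finally show ?case .
qed

lemma commute_funpow:
  assumes "\<And>x. S (T x) = T (S x)"
  shows "(S ^^ k) (T x) = T ((S ^^ k) x)"
  by (induction k) (simp_all add: assms)

section \<open>Resolvents\<close>

lemma inverse_op_unique:
  assumes "\<And>x. B1 (T x) = x" "\<And>x. T (B2 x) = x"
  shows "B1 = B2"
proof
  fix x have "B1 (T (B2 x)) = B2 x" by (rule assms(1))
  then show "B1 x = B2 x" using assms(2) by simp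
qed

lemma resolvent_props:
  assumes "\<mu> \<notin> op_spectrum A"
  shows "bounded_op (resolvent A \<mu>)" "\<And>x. resolvent A \<mu> (shift_op \<mu> A x) = x"
    "\<And>x. shift_op \<mu> A (resolvent A \<mu> x) = x"
proof -
  from assms obtain B where B: "bounded_op B" "B \<circ> shift_op \<mu> A = id" "shift_op \<mu> A \<circ> B = id"
    unfolding op_spectrum_def invertible_op_def by blast
  have "\<exists>!B. bounded_op B \<and> B \<circ> shift_op \<mu> A = id \<and> shift_op \<mu> A \<circ> B = id"
  proof (rule ex1I[of _ B])
    show "bounded_op B \<and> B \<circ> shift_op \<mu> A = id \<and> shift_op \<mu> A \<circ> B = id" using B by blast
    fix B' assume "bounded_op B' \<and> B' \<circ> shift_op \<mu> A = id \<and> shift_op \<mu> A \<circ> B' = id"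
    then show "B' = B" using B inverse_op_unique[of B' "shift_op \<mu> A" B]
      by (metis comp_apply id_apply)
  qed
  then have "bounded_op (resolvent A \<mu>) \<and> resolvent A \<mu> \<circ> shift_op \<mu> A = id \<and> shift_op \<mu> A \<circ> resolvent A \<mu> = id"
    unfolding resolvent_def by (rule theI')
  then show "bounded_op (resolvent A \<mu>)" "\<And>x. resolvent A \<mu> (shift_op \<mu> A x) = x"
    "\<And>x. shift_op \<mu> A (resolvent A \<mu> x) = x"
    by (auto simp: fun_eq_iff)
qed

lemma not_in_spectrumI:
  assumes "bounded_op B" "\<And>x. B (shift_op \<mu> A x) = x" "\<And>x. shift_op \<mu> A (B x) = x"
  shows "\<mu> \<notin> op_spectrum A" "resolvent A \<mu> = B"
proof -
  show ns: "\<mu> \<notin> op_spectrum A" unfolding op_spectrum_def invertible_op_def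
    using assms by (auto simp: fun_eq_iff)
  show "resolvent A \<mu> = B"
    using inverse_op_unique[of "resolvent A \<mu>" "shift_op \<mu> A" B] resolvent_props[OF ns] assms by blast
qed

lemma shift_op_clin: "bounded_op A \<Longrightarrow> clin (shift_op \<mu> A)"
  using bounded_op_shift bounded_op_clin by blast

lemma neumann:
  fixes E :: "'a::complex_hilbert \<Rightarrow> 'a"
  assumes E: "clin E" and Eb: "\<And>x. norm (E x) \<le> c * norm x" and c: "0 \<le> c" "c < 1"
  shows "\<exists>S. clin S \<and> (\<forall>x. norm (S x) \<le> norm x / (1 - c)) \<and> (\<forall>x. S x - E (S x) = x) \<and> (\<forall>x. S (x - E x) = x)"
proof -
  have Ebo: "bounded_op E" by (rule bounded_opI[OF E Eb])
  have Ebl: "bounded_linear E" by (rule bounded_op_bounded_linear[OF Ebo])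
  have Ek: "clin (E ^^ k)" for k by (rule clin_funpow[OF E])
  have pow: "norm ((E ^^ k) x) \<le> c ^ k * norm x" for k x
  proof (induction k)
    case 0 then show ?case by simp
  next
    case (Suc k)
    have "norm ((E ^^ Suc k) x) = norm (E ((E ^^ k) x))" by simp
    also have "\<dots> \<le> c * norm ((E ^^ k) x)" by (rule Eb)
    also have "\<dots> \<le> c * (c ^ k * norm x)" using Suc c by (intro mult_left_mono) auto
    finally show ?case by simp
  qed
  have gsum: "summable (\<lambda>k. c ^ k * norm x)" for x :: 'a
    using c by (intro summable_mult2 summable_geometric) simp
  have summ: "summable (\<lambda>k. (E ^^ k) x)" for x
    by (rule summable_comparison_test[OF _ gsum]) (use pow in blast)
  have nsumm: "summable (\<lambda>k. norm ((E ^^ k) x))" for x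
    by (rule summable_comparison_test[OF _ gsum]) (use pow in auto)
  define S where "S x = (\<Sum>k. (E ^^ k) x)" for x
  have "clin S" unfolding clin_def
  proof (intro conjI allI)
    fix x y
    show "S (x + y) = S x + S y" unfolding S_def
      by (simp add: clin_add[OF Ek] suminf_add[OF summ summ])
  next
    fix a x
    show "S (a *\<^sub>C x) = a *\<^sub>C S x" unfolding S_def
      by (simp add: clin_scale[OF Ek] bounded_linear.suminf[OF bounded_linear_scaleC summ])
  qed
  moreover have "norm (S x) \<le> norm x / (1 - c)" for x
  proof -
    have "norm (S x) \<le> (\<Sum>k. norm ((E ^^ k) x))" unfolding S_def by (rule summable_norm[OF nsumm])
    also have "\<dots> \<le> (\<Sum>k. c ^ k * norm x)" by (rule suminf_le[OF pow nsumm gsum])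
    also have "\<dots> = norm x / (1 - c)"
      using suminf_mult2[OF summable_geometric[of c], of "norm x"] suminf_geometric[of c] c by simp
    finally show ?thesis .
  qed
  moreover have "S x - E (S x) = x" for x
  proof -
    have "E (S x) = (\<Sum>k. E ((E ^^ k) x))" unfolding S_def by (rule bounded_linear.suminf[OF Ebl summ])
    also have "\<dots> = (\<Sum>k. (E ^^ Suc k) x)" by simp
    also have "\<dots> = S x - x" unfolding S_def using suminf_split_head[OF summ[of x]] by simp
    finally show ?thesis by simp
  qed
  moreover have "S (x - E x) = x" for x
  proof -
    have "S (x - E x) = (\<Sum>k. (E ^^ k) x - (E ^^ Suc k) x)"
      unfolding S_def by (simp add: clin_diff[OF Ek] funpow_swap1)
    also have "\<dots> = S x - (\<Sum>k. (E ^^ Suc k) x)"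
      unfolding S_def
    proof (rule suminf_diff[symmetric, OF summ])
      show "summable (\<lambda>k. (E ^^ Suc k) x)" using summable_Suc_iff[of "\<lambda>k. (E ^^ k) x"] summ[of x] by simp
    qed
    also have "(\<Sum>k. (E ^^ Suc k) x) = S x - x" unfolding S_def using suminf_split_head[OF summ[of x]] by simp
    finally show ?thesis by simp
  qed
  ultimately show ?thesis by blast
qed

lemma resolvent_near:
  assumes A: "bounded_op A" and nu: "\<nu> \<notin> op_spectrum A"
    and K: "K > 0" "\<And>x. norm (resolvent A \<nu> x) \<le> K * norm x"
    and mu: "cmod (\<mu> - \<nu>) \<le> 1 / (2 * K)"
  shows "\<mu> \<notin> op_spectrum A" "\<And>x. norm (resolvent A \<mu> x) \<le> 2 * K * norm x"
proof -
  define R where "R = resolvent A \<nu>"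
  note Rp = resolvent_props[OF nu, folded R_def]
  have Rc: "clin R" using Rp(1) by (rule bounded_op_clin)
  have shc: "clin (shift_op \<nu> A)" by (rule shift_op_clin[OF A])
  define E where "E x = - ((\<mu> - \<nu>) *\<^sub>C R x)" for x
  have Ec: "clin E" unfolding clin_def E_def
    by (simp add: clin_add[OF Rc] clin_scale[OF Rc] scaleC_add_right scaleC_minus_right scaleC_scaleC mult.commute)
  have Eb: "norm (E x) \<le> (1/2) * norm x" for x
  proof -
    have "norm (E x) = cmod (\<mu> - \<nu>) * norm (R x)" unfolding E_def by simp
    also have "\<dots> \<le> (1 / (2 * K)) * (K * norm x)"
      using mu K(2)[of x, folded R_def] K(1) by (intro mult_mono) auto
    also have "\<dots> = (1/2) * norm x" using K(1) by simp
    finally show ?thesis .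
  qed
  obtain S where S: "clin S" "\<And>x. norm (S x) \<le> norm x / (1 - 1/2)" "\<And>x. S x - E (S x) = x"
    "\<And>x. S (x - E x) = x"
    using neumann[OF Ec Eb] by auto
  have id1: "shift_op \<mu> A y = shift_op \<nu> A (y - E y)" for y
  proof -
    have "shift_op \<nu> A (E y) = - ((\<mu> - \<nu>) *\<^sub>C y)"
      unfolding E_def by (simp add: clin_minus[OF shc] clin_scale[OF shc] Rp(3)[folded R_def])
    then show ?thesis
      by (simp add: clin_diff[OF shc]) (simp add: shift_op_def scaleC_diff_left algebra_simps)
  qed
  have id2: "shift_op \<mu> A y = shift_op \<nu> A y - E (shift_op \<nu> A y)" for y
    unfolding E_def Rp(2)[folded R_def] by (simp add: shift_op_def scaleC_diff_left algebra_simps)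
  define B where "B x = S (R x)" for x
  have Bbd: "norm (B x) \<le> 2 * K * norm x" for x
  proof -
    have "norm (B x) \<le> 2 * norm (R x)" unfolding B_def using S(2)[of "R x"] by simp
    also have "\<dots> \<le> 2 * (K * norm x)" using K(2)[of x, folded R_def] by simp
    finally show "norm (B x) \<le> 2 * K * norm x" by simp
  qed
  have Bb: "bounded_op B"
  proof (rule bounded_opI[where K="2 * K"])
    show "clin B" unfolding B_def by (rule clin_comp[OF S(1) Rc])
  qed (rule Bbd)
  have B1: "B (shift_op \<mu> A x) = x" for x
    unfolding B_def id1 Rp(2)[folded R_def] by (rule S(4))
  have B2: "shift_op \<mu> A (B x) = x" for x
    unfolding B_def id1 S(3) by (rule Rp(3)[folded R_def])
  show "\<mu> \<notin> op_spectrum A" by (rule not_in_spectrumI(1)[OF Bb B1 B2])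
  have "resolvent A \<mu> = B" by (rule not_in_spectrumI(2)[OF Bb B1 B2])
  then show "\<And>x. norm (resolvent A \<mu> x) \<le> 2 * K * norm x" using Bbd by simp
qed

lemma resolvent_clin: "\<mu> \<notin> op_spectrum A \<Longrightarrow> clin (resolvent A \<mu>)"
  using resolvent_props(1) bounded_op_clin by blast

lemma resolvent_identity:
  assumes A: "bounded_op A" and mu: "\<mu> \<notin> op_spectrum A" and nu: "\<nu> \<notin> op_spectrum A"
  shows "resolvent A \<mu> x - resolvent A \<nu> x = (\<nu> - \<mu>) *\<^sub>C resolvent A \<mu> (resolvent A \<nu> x)"
proof -
  define y where "y = resolvent A \<nu> x"
  have "x = shift_op \<nu> A y" unfolding y_def by (rule resolvent_props(3)[OF nu, symmetric])
  also have "\<dots> = shift_op \<mu> A y + (\<nu> - \<mu>) *\<^sub>C y"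
    by (simp add: shift_op_def scaleC_diff_left algebra_simps)
  finally have "resolvent A \<mu> x = resolvent A \<mu> (shift_op \<mu> A y + (\<nu> - \<mu>) *\<^sub>C y)" by simp
  also have "\<dots> = y + (\<nu> - \<mu>) *\<^sub>C resolvent A \<mu> y"
    by (simp add: clin_add[OF resolvent_clin[OF mu]] clin_scale[OF resolvent_clin[OF mu]] resolvent_props(2)[OF mu])
  finally show ?thesis unfolding y_def by simp
qed

lemma resolvent_local:
  assumes A: "bounded_op A" and nu: "\<nu> \<notin> op_spectrum A"
  shows "\<exists>d>0. \<exists>M>0. \<forall>\<mu>. cmod (\<mu> - \<nu>) < d \<longrightarrow> \<mu> \<notin> op_spectrum A \<and> (\<forall>x. norm (resolvent A \<mu> x) \<le> M * norm x)"
proof -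
  obtain K where K: "K > 0" "\<And>x. norm (resolvent A \<nu> x) \<le> K * norm x"
    using bounded_op_bound[OF resolvent_props(1)[OF nu]] by blast
  have main: "\<forall>\<mu>. cmod (\<mu> - \<nu>) < 1 / (2 * K) \<longrightarrow> \<mu> \<notin> op_spectrum A \<and> (\<forall>x. norm (resolvent A \<mu> x) \<le> (2 * K) * norm x)"
  proof (intro allI impI conjI)
    fix \<mu> assume "cmod (\<mu> - \<nu>) < 1 / (2 * K)"
    then have le: "cmod (\<mu> - \<nu>) \<le> 1 / (2 * K)" by simp
    show "\<mu> \<notin> op_spectrum A" by (rule resolvent_near(1)[OF A nu K le])
    fix x show "norm (resolvent A \<mu> x) \<le> 2 * K * norm x" using resolvent_near(2)[OF A nu K le] by blast
  qed
  moreover have "1 / (2 * K) > 0" "2 * K > 0" using K(1) by auto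
  ultimately show ?thesis by blast
qed

lemma open_resolvent_set: "bounded_op A \<Longrightarrow> open (- op_spectrum A)"
  unfolding open_dist
proof
  fix \<nu> assume A: "bounded_op A" and "\<nu> \<in> - op_spectrum A"
  then obtain d where "d > 0" "\<forall>\<mu>. cmod (\<mu> - \<nu>) < d \<longrightarrow> \<mu> \<notin> op_spectrum A"
    using resolvent_local[OF A] by blast
  then show "\<exists>e>0. \<forall>y. dist y \<nu> < e \<longrightarrow> y \<in> - op_spectrum A" by (auto simp: dist_norm)
qed

lemma closed_spectrum: "bounded_op A \<Longrightarrow> closed (op_spectrum A)"
  using open_resolvent_set by (simp add: closed_def)

lemma resolvent_tendsto:
  assumes A: "bounded_op A" and nu: "\<nu> \<notin> op_spectrum A"
  shows "((\<lambda>\<mu>. resolvent A \<mu> z) \<longlongrightarrow> resolvent A \<nu> z) (at \<nu>)"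
proof -
  obtain d M where d: "d > 0" "M > 0"
    and dM: "\<And>\<mu>. cmod (\<mu> - \<nu>) < d \<Longrightarrow> \<mu> \<notin> op_spectrum A \<and> (\<forall>x. norm (resolvent A \<mu> x) \<le> M * norm x)"
    using resolvent_local[OF A nu] by blast
  define C where "C = M * norm (resolvent A \<nu> z) + 1"
  have C: "C > 0" unfolding C_def using d by (simp add: add_nonneg_pos)
  show ?thesis unfolding tendsto_iff
  proof (intro allI impI)
    fix e :: real assume e: "e > 0"
    show "\<forall>\<^sub>F \<mu> in at \<nu>. dist (resolvent A \<mu> z) (resolvent A \<nu> z) < e"
      unfolding eventually_at
    proof (intro exI[of _ "min d (e / C)"] conjI ballI impI)
      show "0 < min d (e / C)" using d e C by simp
      fix \<mu> assume h: "\<mu> \<in> UNIV" "\<mu> \<noteq> \<nu> \<and> dist \<mu> \<nu> < min d (e / C)"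
      then have md: "cmod (\<mu> - \<nu>) < d" and me: "cmod (\<mu> - \<nu>) < e / C" by (auto simp: dist_norm)
      note mu = dM[OF md]
      have "dist (resolvent A \<mu> z) (resolvent A \<nu> z) = cmod (\<nu> - \<mu>) * norm (resolvent A \<mu> (resolvent A \<nu> z))"
        unfolding dist_norm resolvent_identity[OF A conjunct1[OF mu] nu] by simp
      also have "\<dots> \<le> cmod (\<mu> - \<nu>) * (M * norm (resolvent A \<nu> z))"
      proof -
        have "norm (resolvent A \<mu> (resolvent A \<nu> z)) \<le> M * norm (resolvent A \<nu> z)" using mu by blast
        then show ?thesis by (simp add: norm_minus_commute mult_left_mono)
      qed
      also have "\<dots> \<le> cmod (\<mu> - \<nu>) * C" unfolding C_def by (intro mult_left_mono) auto
      also have "\<dots> < e / C * C" using me C by (intro mult_strict_right_mono) auto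
      finally show "dist (resolvent A \<mu> z) (resolvent A \<nu> z) < e" using C by simp
    qed
  qed
qed

lemma resolvent_continuous_on:
  assumes A: "bounded_op A"
  shows "continuous_on (- op_spectrum A) (\<lambda>\<mu>. resolvent A \<mu> z)"
  by (rule continuous_at_imp_continuous_on) (auto simp: isCont_def intro: resolvent_tendsto[OF A])

lemma weak_resolvent_deriv:
  assumes A: "bounded_op A" and nu: "\<nu> \<notin> op_spectrum A"
  shows "((\<lambda>\<mu>. cinner y (resolvent A \<mu> x)) has_field_derivative
           - cinner y (resolvent A \<nu> (resolvent A \<nu> x))) (at \<nu>)"
  unfolding has_field_derivative_iff
proof (rule Lim_transform_eventually)
  show "((\<lambda>\<mu>. - cinner y (resolvent A \<mu> (resolvent A \<nu> x))) \<longlongrightarrow>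
      - cinner y (resolvent A \<nu> (resolvent A \<nu> x))) (at \<nu>)"
    by (intro tendsto_minus bounded_linear.tendsto[OF bounded_linear_cinner_right] resolvent_tendsto[OF A nu])
  obtain d where d: "d > 0" "\<And>\<mu>. cmod (\<mu> - \<nu>) < d \<Longrightarrow> \<mu> \<notin> op_spectrum A"
    using resolvent_local[OF A nu] by blast
  show "\<forall>\<^sub>F \<mu> in at \<nu>. - cinner y (resolvent A \<mu> (resolvent A \<nu> x)) =
      (cinner y (resolvent A \<mu> x) - cinner y (resolvent A \<nu> x)) / (\<mu> - \<nu>)"
    unfolding eventually_at
  proof (intro exI[of _ d] conjI ballI impI)
    fix \<mu> assume "\<mu> \<in> UNIV" "\<mu> \<noteq> \<nu> \<and> dist \<mu> \<nu> < d"
    then have ne: "\<mu> \<noteq> \<nu>" and mu: "\<mu> \<notin> op_spectrum A" using d by (auto simp: dist_norm)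
    have "cinner y (resolvent A \<mu> x) - cinner y (resolvent A \<nu> x)
        = (\<nu> - \<mu>) * cinner y (resolvent A \<mu> (resolvent A \<nu> x))"
      by (simp add: cinner_diff_right[symmetric] resolvent_identity[OF A mu nu] cinner_scaleC_right)
    then show "- cinner y (resolvent A \<mu> (resolvent A \<nu> x)) =
      (cinner y (resolvent A \<mu> x) - cinner y (resolvent A \<nu> x)) / (\<mu> - \<nu>)"
      using ne by (simp add: field_simps)
  qed (use d in auto)
qed

lemma weak_resolvent_holomorphic:
  assumes A: "bounded_op A"
  shows "(\<lambda>\<mu>. cinner y (resolvent A \<mu> x)) holomorphic_on (- op_spectrum A)"
  using weak_resolvent_deriv[OF A] holomorphic_on_open[OF open_resolvent_set[OF A]] by blast

lemma resolvent_bounded_on_compact: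
  assumes A: "bounded_op A" and K: "compact K" "K \<subseteq> - op_spectrum A"
  shows "\<exists>M. \<forall>\<mu>\<in>K. norm (resolvent A \<mu> x) \<le> M"
proof -
  have "continuous_on K (\<lambda>\<mu>. resolvent A \<mu> x)"
    using resolvent_continuous_on[OF A] K(2) continuous_on_subset by blast
  then have "compact ((\<lambda>\<mu>. resolvent A \<mu> x) ` K)" using K(1) compact_continuous_image by blast
  then have "bounded ((\<lambda>\<mu>. resolvent A \<mu> x) ` K)" by (rule compact_imp_bounded)
  then show ?thesis unfolding bounded_iff by blast
qed

lemma winding_zero_outside_component:
  fixes K :: "complex set" and \<Gamma> :: "real \<Rightarrow> complex"
  assumes p: "path \<Gamma>" and loop: "pathfinish \<Gamma> = pathstart \<Gamma>"
    and S: "open S" and pS: "path_image \<Gamma> \<subseteq> S"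
    and w0: "\<And>z. z \<notin> S \<Longrightarrow> winding_number \<Gamma> z = 0"
    and z: "z \<notin> connected_component_set S (pathstart \<Gamma>)"
  shows "winding_number \<Gamma> z = 0"
proof (cases "z \<in> S")
  case False then show ?thesis using w0 by blast
next
  case zS: True
  define W where "W = connected_component_set S (pathstart \<Gamma>)"
  have pW: "path_image \<Gamma> \<subseteq> W" unfolding W_def
    by (rule connected_component_maximal[OF pathstart_in_path_image connected_path_image[OF p] pS])
  have zP: "z \<notin> path_image \<Gamma>" using pW z W_def by blast
  define V where "V = connected_component_set (- path_image \<Gamma>) z"
  have zV: "z \<in> V" unfolding V_def using zP by (simp add: connected_component_refl)
  have cV: "connected V" unfolding V_def by (rule connected_connected_component)
  have VP: "V \<inter> path_image \<Gamma> = {}" unfolding V_def using connected_component_subset by blast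
  have windV: "winding_number \<Gamma> q = winding_number \<Gamma> z" if "q \<in> V" for q
    by (rule winding_number_eq[OF p loop that zV cV VP])
  show ?thesis
  proof (cases "V \<subseteq> S")
    case False
    then obtain q where "q \<in> V" "q \<notin> S" by blast
    then show ?thesis using windV w0 by metis
  next
    case VS: True
    show ?thesis
    proof (cases "bounded V")
      case False
      obtain B where B: "\<And>w. B \<le> norm w \<Longrightarrow> winding_number \<Gamma> w = 0"
        using winding_number_zero_at_infinity[OF p loop] by blast
      from False obtain q where "q \<in> V" "norm q > B" unfolding bounded_iff by (meson not_le)
      then show ?thesis using windV B by (metis less_imp_le)
    next
      case True
      have "V \<noteq> UNIV" using True not_bounded_UNIV by metis
      moreover have "V \<noteq> {}" using zV by blast
      ultimately obtain q where qf: "q \<in> frontier V" using frontier_not_empty by blast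
      have "frontier V \<subseteq> frontier (- path_image \<Gamma>)" unfolding V_def
        by (rule frontier_of_connected_component_subset)
      also have "\<dots> = frontier (path_image \<Gamma>)" by simp
      also have "\<dots> \<subseteq> path_image \<Gamma>" by (rule frontier_subset_closed[OF closed_path_image[OF p]])
      finally have qP: "q \<in> path_image \<Gamma>" using qf by blast
      then have qW: "q \<in> W" using pW by blast
      define W' where "W' = connected_component_set S z"
      have VW': "V \<subseteq> W'" unfolding W'_def by (rule connected_component_maximal[OF zV cV VS])
      have "q \<in> closure V" using qf unfolding frontier_def by blast
      then have qcl: "q \<in> closure W'" using closure_mono[OF VW'] by blast
      have "z \<in> W'" unfolding W'_def using zS by (simp add: connected_component_refl_eq)
      then have "W \<noteq> W'" using z unfolding W_def by blast
      then have "W \<inter> W' = {}" unfolding W_def W'_def using connected_component_nonoverlap by metis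
      then have "q \<notin> W'" using qW by blast
      then have "q \<notin> interior W'" using interior_subset by blast
      then have "q \<in> frontier W'" using qcl unfolding frontier_def by blast
      also have "frontier W' \<subseteq> frontier S" unfolding W'_def by (rule frontier_of_connected_component_subset)
      finally have "q \<notin> S" using S unfolding frontier_def by (simp add: interior_open)
      moreover have "q \<in> S" using qP pS by blast
      ultimately show ?thesis by blast
    qed
  qed
qed

lemma contour_to_circle:
  fixes K :: "complex set" and \<Gamma> :: "real \<Rightarrow> complex" and g :: "complex \<Rightarrow> complex"
  assumes K: "closed K" and lK: "l \<in> K"
    and iso: "\<And>z. z \<in> K \<Longrightarrow> z \<noteq> l \<Longrightarrow> \<delta> \<le> cmod (z - l)"
    and vp: "valid_path \<Gamma>" and loop: "pathfinish \<Gamma> = pathstart \<Gamma>" and disj: "path_image \<Gamma> \<inter> K = {}"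
    and w1: "winding_number \<Gamma> l = 1" and w0: "\<And>z. z \<in> K - {l} \<Longrightarrow> winding_number \<Gamma> z = 0"
    and holo: "g holomorphic_on (- K)"
    and r: "0 < r" "r < \<delta>"
  shows "contour_integral \<Gamma> g = contour_integral (circlepath l r) g"
proof -
  have p: "path \<Gamma>" using vp by (rule valid_path_imp_path)
  define S where "S = - (K - {l})"
  have "K - {l} = K - ball l \<delta>"
  proof
    show "K - {l} \<subseteq> K - ball l \<delta>"
    proof
      fix x assume x: "x \<in> K - {l}"
      then have "\<delta> \<le> cmod (x - l)" using iso by blast
      then show "x \<in> K - ball l \<delta>" using x by (simp add: dist_norm norm_minus_commute)
    qed
    show "K - ball l \<delta> \<subseteq> K - {l}" using r by auto
  qed
  then have "closed (K - {l})" using K by (simp add: closed_Diff)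
  then have oS: "open S" unfolding S_def by (rule open_Compl)
  have pS: "path_image \<Gamma> \<subseteq> S" unfolding S_def using disj by blast
  define W where "W = connected_component_set S (pathstart \<Gamma>)"
  have pW: "path_image \<Gamma> \<subseteq> W" unfolding W_def
    by (rule connected_component_maximal[OF pathstart_in_path_image connected_path_image[OF p] pS])
  have WS: "W \<subseteq> S" unfolding W_def by (rule connected_component_subset)
  have homo: "\<forall>z. z \<notin> W \<longrightarrow> winding_number \<Gamma> z = 0"
  proof (intro allI impI)
    fix z assume "z \<notin> W"
    show "winding_number \<Gamma> z = 0"
    proof (rule winding_zero_outside_component[OF p loop oS pS])
      show "z \<notin> connected_component_set S (pathstart \<Gamma>)" using \<open>z \<notin> W\<close> W_def by blast
      fix w assume "w \<notin> S" then show "winding_number \<Gamma> w = 0" using w0 unfolding S_def by blast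
    qed
  qed
  have lP: "l \<notin> path_image \<Gamma>" using disj lK by blast
  have "contour_integral \<Gamma> g = 2 * pi * \<i> * (\<Sum>p\<in>{l}. winding_number \<Gamma> p * residue g p)"
  proof (rule Residue_theorem)
    show "open W" unfolding W_def by (rule open_connected_component[OF oS])
    show "connected W" unfolding W_def by (rule connected_connected_component)
    show "g holomorphic_on W - {l}"
      by (rule holomorphic_on_subset[OF holo]) (use WS S_def in blast)
    show "path_image \<Gamma> \<subseteq> W - {l}" using pW lP by blast
  qed (use vp loop homo in auto)
  also have "\<dots> = 2 * pi * \<i> * residue g l" using w1 by simp
  finally have 1: "contour_integral \<Gamma> g = 2 * pi * \<i> * residue g l" .
  have "(g has_contour_integral 2 * pi * \<i> * residue g l) (circlepath l r)"
  proof (rule base_residue[OF oS])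
    show "l \<in> S" unfolding S_def by blast
    show "g holomorphic_on S - {l}" by (rule holomorphic_on_subset[OF holo]) (auto simp: S_def)
    show "cball l r \<subseteq> S"
    proof
      fix z assume "z \<in> cball l r"
      then have "cmod (z - l) \<le> r" by (simp add: dist_norm norm_minus_commute)
      then show "z \<in> S" unfolding S_def using iso r by force
    qed
  qed (use r in auto)
  then have "contour_integral (circlepath l r) g = 2 * pi * \<i> * residue g l"
    by (rule contour_integral_unique)
  then show ?thesis using 1 by simp
qed

section \<open>Roots of unity and sectors\<close>

lemma cis_eq_1D: "cis x = 1 \<Longrightarrow> \<exists>m::int. x = 2 * pi * of_int m"
proof -
  assume "cis x = 1"
  then have "exp (\<i> * complex_of_real x) = 1" by (simp add: cis_conv_exp)
  then obtain m :: int where "Im (\<i> * complex_of_real x) = of_int (2 * m) * pi" unfolding exp_eq_1 by blast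
  then have "x = 2 * pi * of_int m" by simp
  then show ?thesis by blast
qed

lemma root_unity_pow: "n > 0 \<Longrightarrow> cis (2 * pi / real n) ^ n = 1"
proof -
  assume n: "n > 0"
  have "cis (2 * pi / real n) ^ n = cis (real n * (2 * pi / real n))" by (rule Complex.DeMoivre)
  also have "real n * (2 * pi / real n) = 2 * pi * of_int 1" using n by simp
  finally show ?thesis by (metis cis_multiple_2pi Ints_1 of_int_1)
qed

lemma root_unity_ne1:
  assumes "0 < k" "k < n"
  shows "cis (2 * pi / real n) ^ k \<noteq> 1"
proof
  assume "cis (2 * pi / real n) ^ k = 1"
  then have "cis (real k * (2 * pi / real n)) = 1" by (simp only: Complex.DeMoivre)
  then obtain m :: int where m: "real k * (2 * pi / real n) = 2 * pi * of_int m" using cis_eq_1D by blast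
  have n0: "real n > 0" using assms by simp
  from m have "real k = real n * of_int m" using n0 by (simp add: field_simps)
  then have km: "int k = int n * m" by (metis of_int_eq_iff of_int_mult of_int_of_nat_eq)
  have "0 < int n * m" using km assms by simp
  then have "m > 0" using assms by (simp add: zero_less_mult_iff)
  then have "(1::int) \<le> m" by simp
  then have "int n * 1 \<le> int n * m" by (intro mult_left_mono) auto
  then have ge: "int n * m \<ge> int n" by simp
  have "int k < int n" using assms by simp
  then show False using km ge by linarith
qed

lemma sector_root_unique:
  assumes n: "n > 0" and w: "w < 2 * pi / real n"
    and l: "l \<in> angle_sector \<theta> w" and om: "\<omega> \<in> angle_sector \<theta> w"
    and l0: "l \<noteq> 0" and eq: "\<omega> ^ n = l ^ n"
  shows "\<omega> = l"
proof -
  have om0: "\<omega> \<noteq> 0"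
  proof
    assume "\<omega> = 0"
    then have "\<omega> ^ n = 0" using n by simp
    then have "l ^ n = 0" using eq by simp
    then show False using l0 by simp
  qed
  have sec: "\<exists>t. \<theta> \<le> t \<and> t \<le> \<theta> + w \<and> z = of_real (cmod z) * cis t"
    if "z \<in> angle_sector \<theta> w" "z \<noteq> 0" for z
  proof -
    have "z = 0 \<or> (\<exists>t. \<theta> \<le> t \<and> t \<le> \<theta> + w \<and> z = of_real (cmod z) * cis t)"
      using that(1) unfolding angle_sector_def by (rule CollectD)
    then show ?thesis
    proof (rule disjE)
      assume "z = 0" with that(2) show ?thesis by (rule notE)
    qed
  qed
  obtain t1 where t1: "\<theta> \<le> t1" "t1 \<le> \<theta> + w" "l = of_real (cmod l) * cis t1"
    using sec[OF l l0] by (elim exE conjE) (rule that)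
  obtain t2 where t2: "\<theta> \<le> t2" "t2 \<le> \<theta> + w" "\<omega> = of_real (cmod \<omega>) * cis t2"
    using sec[OF om om0] by (elim exE conjE) (rule that)
  have "cmod (\<omega> ^ n) = cmod (l ^ n)" using eq by (rule arg_cong)
  then have "cmod \<omega> ^ n = cmod l ^ n" by (simp only: norm_power)
  then have r: "cmod \<omega> = cmod l" by (rule power_eq_imp_eq_base[OF _ norm_ge_zero norm_ge_zero n])
  from t1(3) have L: "l ^ n = (of_real (cmod l) * cis t1) ^ n" by (rule arg_cong)
  from t2(3) have O: "\<omega> ^ n = (of_real (cmod \<omega>) * cis t2) ^ n" by (rule arg_cong)
  have "(of_real (cmod l) * cis t2) ^ n = (of_real (cmod l) * cis t1) ^ n"
    using L O eq r by simp
  then have "of_real (cmod l) ^ n * cis t2 ^ n = of_real (cmod l) ^ n * cis t1 ^ n"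
    by (simp only: power_mult_distrib)
  moreover have "(of_real (cmod l) :: complex) ^ n \<noteq> 0" using l0 by simp
  ultimately have "cis t2 ^ n = cis t1 ^ n" using l0 by auto
  then have eqc: "cis (real n * t2) = cis (real n * t1)" by (simp only: Complex.DeMoivre)
  have "cis (real n * t2 - real n * t1) = cis (real n * t2) / cis (real n * t1)" by (rule cis_divide[symmetric])
  also have "\<dots> = 1" using eqc by simp
  finally obtain m :: int where m: "real n * t2 - real n * t1 = 2 * pi * of_int m" using cis_eq_1D by blast
  have "\<bar>t2 - t1\<bar> \<le> w" using t1(1,2) t2(1,2) by linarith
  then have "\<bar>real n * (t2 - t1)\<bar> \<le> real n * w" using n by (simp add: abs_mult)
  also have "\<dots> < 2 * pi" using w n by (simp add: field_simps)
  finally have "\<bar>2 * pi * of_int m\<bar> < 2 * pi" using m by (simp add: algebra_simps)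
  then have "\<bar>of_int m :: real\<bar> < 1" by (simp add: abs_mult)
  then have "m = 0" by linarith
  then have "t2 = t1" using m n by simp
  then have tt: "cis t2 = cis t1" by simp
  have "\<omega> = of_real (cmod \<omega>) * cis t2" by (rule t2(3))
  also have "\<dots> = of_real (cmod l) * cis t1" by (simp only: r tt)
  also have "\<dots> = l" by (rule t1(3)[symmetric])
  finally show ?thesis .
qed

lemma eigen_from_power:
  fixes X :: "'a::complex_hilbert \<Rightarrow> 'a"
  assumes X: "clin X" and n: "n > 0" and l0: "l \<noteq> 0"
    and pw: "(X ^^ n) u = (l ^ n) *\<^sub>C u"
    and inj: "\<And>\<omega> w. \<omega> ^ n = l ^ n \<Longrightarrow> \<omega> \<noteq> l \<Longrightarrow> X w = \<omega> *\<^sub>C w \<Longrightarrow> w = 0"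
  shows "X u = l *\<^sub>C u"
proof -
  define r where "r = cis (2 * pi / real n)"
  have r0: "r \<noteq> 0" unfolding r_def by simp
  have rn: "r ^ n = 1" unfolding r_def by (rule root_unity_pow[OF n])
  have rk: "r ^ k \<noteq> 1" if "0 < k" "k < n" for k unfolding r_def by (rule root_unity_ne1[OF that])
  define z where "z j = l * r ^ j" for j :: nat
  have z0: "z j \<noteq> 0" for j unfolding z_def using l0 r0 by simp
  have swap: "(a ^ i) ^ j = (a ^ j) ^ i" for a :: complex and i j by (metis power_mult mult.commute)
  have zn: "z j ^ n = l ^ n" for j
    unfolding z_def by (simp add: power_mult_distrib swap[of r j n] rn)
  have Xk: "clin (X ^^ k)" for k by (rule clin_funpow[OF X])
  define f where "f j k = (inverse (z j)) ^ k *\<^sub>C (X ^^ k) u" for j k :: nat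
  define w where "w j = (\<Sum>k<n. f j k)" for j
  have eig: "X (w j) = z j *\<^sub>C w j" for j
  proof -
    have a: "X (f j k) = z j *\<^sub>C f j (Suc k)" for k
      unfolding f_def using z0[of j]
      by (simp add: clin_scale[OF X] scaleC_scaleC field_simps)
    have "inverse (z j) ^ n * l ^ n = 1" using zn[of j] l0 by (simp add: power_inverse)
    then have fn: "f j n = u" unfolding f_def pw scaleC_scaleC by simp
    have f0: "f j 0 = u" unfolding f_def by simp
    have "X (w j) - z j *\<^sub>C w j = (\<Sum>k<n. z j *\<^sub>C f j (Suc k)) - (\<Sum>k<n. z j *\<^sub>C f j k)"
      unfolding w_def by (simp add: clin_sum[OF X] a scaleC_sum_right)
    also have "\<dots> = z j *\<^sub>C (\<Sum>k<n. f j (Suc k) - f j k)"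
      by (simp add: scaleC_sum_right scaleC_diff_right sum_subtractf)
    also have "\<dots> = 0" by (simp add: sum_lessThan_telescope fn f0)
    finally show ?thesis by simp
  qed
  have wz: "w j = 0" if "0 < j" "j < n" for j
  proof (rule inj[OF zn])
    show "z j \<noteq> l" unfolding z_def using rk[OF that] l0 by simp
    show "X (w j) = z j *\<^sub>C w j" by (rule eig)
  qed
  have csum: "(\<Sum>j<n. inverse (z j) ^ k) = (if k = 0 then of_nat n else 0)" if "k < n" for k
  proof (cases "k = 0")
    case True then show ?thesis by simp
  next
    case False
    define q where "q = inverse (r ^ k)"
    have "(\<Sum>j<n. inverse (z j) ^ k) = (\<Sum>j<n. inverse l ^ k * q ^ j)"
    proof (intro sum.cong refl)
      fix j
      have "inverse (z j) ^ k = inverse (l ^ k * (r ^ j) ^ k)"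
        unfolding z_def by (simp add: power_inverse power_mult_distrib)
      also have "\<dots> = inverse l ^ k * inverse ((r ^ k) ^ j)"
        by (simp add: swap[of r j k] power_inverse)
      also have "\<dots> = inverse l ^ k * q ^ j" unfolding q_def by (simp add: power_inverse)
      finally show "inverse (z j) ^ k = inverse l ^ k * q ^ j" .
    qed
    also have "\<dots> = inverse l ^ k * (\<Sum>j<n. q ^ j)" by (simp add: sum_distrib_left)
    also have "(\<Sum>j<n. q ^ j) = 0"
    proof -
      have "r ^ k \<noteq> 1" using rk[of k] False that by simp
      then have q1: "q \<noteq> 1" unfolding q_def by (metis inverse_1 inverse_inverse_eq)
      have "q ^ n = 1" unfolding q_def
        by (simp add: power_inverse swap[of r k n] rn)
      then show ?thesis using q1 by (simp add: sum_gp_strict)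
    qed
    finally show ?thesis using False by simp
  qed
  have "(\<Sum>j<n. w j) = (\<Sum>j<n. \<Sum>k<n. f j k)" unfolding w_def by simp
  also have "\<dots> = (\<Sum>k<n. \<Sum>j<n. f j k)" by (rule sum.swap)
  also have "\<dots> = (\<Sum>k<n. (\<Sum>j<n. inverse (z j) ^ k) *\<^sub>C (X ^^ k) u)"
    unfolding f_def by (simp only: scaleC_sum_left)
  finally have "(\<Sum>j<n. w j) = (\<Sum>k<n. (\<Sum>j<n. inverse (z j) ^ k) *\<^sub>C (X ^^ k) u)" .
  also have "\<dots> = (\<Sum>k<n. (if k = 0 then of_nat n *\<^sub>C u else 0))"
    by (intro sum.cong refl) (simp add: csum)
  also have "\<dots> = of_nat n *\<^sub>C u" using n by (simp add: sum.delta)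
  finally have s1: "(\<Sum>j<n. w j) = of_nat n *\<^sub>C u" .
  obtain m where nm: "n = Suc m" using n by (metis Suc_pred)
  have "(\<Sum>j<n. w j) = w 0 + (\<Sum>j<m. w (Suc j))" unfolding nm by (rule sum.lessThan_Suc_shift)
  also have "(\<Sum>j<m. w (Suc j)) = 0" by (intro sum.neutral ballI wz) (auto simp: nm)
  finally have "w 0 = of_nat n *\<^sub>C u" using s1 by simp
  moreover have "X (w 0) = l *\<^sub>C w 0" using eig[of 0] by (simp add: z_def)
  ultimately have "of_nat n *\<^sub>C X u = of_nat n *\<^sub>C (l *\<^sub>C u)"
    by (simp add: clin_scale[OF X] scaleC_scaleC mult.commute)
  then show ?thesis by (rule scaleC_cancel[rotated]) (use n in simp)
qed

lemma poly_factor: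
  fixes X :: "'a::complex_hilbert \<Rightarrow> 'a"
  assumes X: "clin X"
  shows "(\<Sum>j<n. \<mu> ^ (n - 1 - j) *\<^sub>C (X ^^ j) (\<mu> *\<^sub>C w - X w)) = \<mu> ^ n *\<^sub>C w - (X ^^ n) w"
proof (induction n)
  case 0 then show ?case by simp
next
  case (Suc n)
  define d where "d = \<mu> *\<^sub>C w - X w"
  have Xn: "clin (X ^^ n)" by (rule clin_funpow[OF X])
  have "(\<Sum>j<Suc n. \<mu> ^ (Suc n - 1 - j) *\<^sub>C (X ^^ j) d)
      = (\<Sum>j<n. \<mu> ^ (n - j) *\<^sub>C (X ^^ j) d) + (X ^^ n) d" by simp
  also have "(\<Sum>j<n. \<mu> ^ (n - j) *\<^sub>C (X ^^ j) d) = \<mu> *\<^sub>C (\<Sum>j<n. \<mu> ^ (n - 1 - j) *\<^sub>C (X ^^ j) d)"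
    unfolding scaleC_sum_right
    by (intro sum.cong refl) (simp add: scaleC_scaleC power_Suc[symmetric] Suc_diff_Suc)
  also have "(\<Sum>j<n. \<mu> ^ (n - 1 - j) *\<^sub>C (X ^^ j) d) = \<mu> ^ n *\<^sub>C w - (X ^^ n) w"
    using Suc d_def by simp
  also have "(X ^^ n) d = \<mu> *\<^sub>C (X ^^ n) w - (X ^^ Suc n) w"
    unfolding d_def by (simp add: clin_diff[OF Xn] clin_scale[OF Xn] funpow_swap1)
  finally show ?case
    by (simp add: d_def scaleC_diff_right scaleC_scaleC)
qed

section \<open>Normal operators\<close>

lemma normal_norm_eq:
  fixes T T' :: "'a::complex_hilbert \<Rightarrow> 'a"
  assumes adj: "\<And>x y. cinner (T x) y = cinner x (T' y)" and comm: "\<And>x. T (T' x) = T' (T x)"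
  shows "norm (T' z) = norm (T z)"
proof -
  have "(norm (T' z))\<^sup>2 = Re (cinner (T' z) (T' z))" by (rule norm_sq_cinner)
  also have "cinner (T' z) (T' z) = cinner (T (T' z)) z" by (rule adj[symmetric])
  also have "\<dots> = cinner (T' (T z)) z" by (simp add: comm)
  also have "\<dots> = cnj (cinner z (T' (T z)))" by (rule cinner_conj)
  also have "cinner z (T' (T z)) = cinner (T z) (T z)" by (rule adj[symmetric])
  finally have "(norm (T' z))\<^sup>2 = (norm (T z))\<^sup>2" by (simp add: norm_sq_cinner)
  then show ?thesis by (simp add: power2_eq_iff_nonneg)
qed

lemma normal_sq_bound:
  fixes T T' :: "'a::complex_hilbert \<Rightarrow> 'a"
  assumes adj: "\<And>x y. cinner (T x) y = cinner x (T' y)" and comm: "\<And>x. T (T' x) = T' (T x)"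
  shows "(norm (T w))\<^sup>2 \<le> norm (T (T w)) * norm w"
proof -
  have "(norm (T w))\<^sup>2 = Re (cinner (T w) (T w))" by (rule norm_sq_cinner)
  also have "\<dots> = Re (cinner w (T' (T w)))" by (simp add: adj)
  also have "\<dots> \<le> cmod (cinner w (T' (T w)))" by (rule complex_Re_le_cmod)
  also have "\<dots> \<le> norm w * norm (T' (T w))" by (rule Cauchy_Schwarz_cinner)
  also have "norm (T' (T w)) = norm (T (T w))" by (rule normal_norm_eq[OF adj comm])
  finally show ?thesis by (simp add: mult.commute)
qed

lemma normal_growth:
  fixes T T' :: "'a::complex_hilbert \<Rightarrow> 'a"
  assumes adj: "\<And>x y. cinner (T x) y = cinner x (T' y)" and comm: "\<And>x. T (T' x) = T' (T x)"
    and Tv: "T v \<noteq> 0" and v0: "v \<noteq> 0"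
  shows "(norm (T v) / norm v) ^ k * norm v \<le> norm ((T ^^ k) v)"
proof -
  define r where "r = norm (T v) / norm v"
  have r: "r > 0" unfolding r_def using Tv v0 by simp
  have "r ^ k * norm v \<le> norm ((T ^^ k) v) \<and> r * norm ((T ^^ k) v) \<le> norm ((T ^^ Suc k) v)"
  proof (induction k)
    case 0 then show ?case unfolding r_def using v0 by simp
  next
    case (Suc k)
    have a: "r ^ Suc k * norm v \<le> norm ((T ^^ Suc k) v)"
    proof -
      have "r ^ Suc k * norm v = r * (r ^ k * norm v)" by simp
      also have "\<dots> \<le> r * norm ((T ^^ k) v)" using Suc r by (intro mult_left_mono) auto
      also have "\<dots> \<le> norm ((T ^^ Suc k) v)" using Suc by blast
      finally show ?thesis .
    qed
    have pos: "norm ((T ^^ k) v) > 0"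
    proof -
      have "0 < r ^ k * norm v" using r v0 by simp
      then show ?thesis using Suc by linarith
    qed
    have "(norm ((T ^^ Suc k) v))\<^sup>2 \<le> norm ((T ^^ Suc (Suc k)) v) * norm ((T ^^ k) v)"
      using normal_sq_bound[OF adj comm, of "(T ^^ k) v"] by simp
    moreover have "r * norm ((T ^^ k) v) * norm ((T ^^ Suc k) v) \<le> (norm ((T ^^ Suc k) v))\<^sup>2"
      using Suc by (simp add: power2_eq_square mult_right_mono)
    ultimately have "r * norm ((T ^^ Suc k) v) * norm ((T ^^ k) v) \<le> norm ((T ^^ Suc (Suc k)) v) * norm ((T ^^ k) v)"
      by (simp add: mult_ac)
    then have "r * norm ((T ^^ Suc k) v) \<le> norm ((T ^^ Suc (Suc k)) v)"
      using pos by (simp add: mult_le_cancel_right)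
    then show ?case using a by blast
  qed
  then show ?thesis unfolding r_def by blast
qed

lemma weak_vector_exists:
  fixes F :: "'a::complex_hilbert \<Rightarrow> complex"
  assumes add: "\<And>y1 y2. F (y1 + y2) = F y1 + F y2"
    and sc: "\<And>c y. F (c *\<^sub>C y) = cnj c * F y"
    and bd: "\<And>y. cmod (F y) \<le> K * norm y"
  shows "\<exists>v. \<forall>y. F y = cinner y v"
proof -
  have "\<exists>v. \<forall>y. cnj (F y) = cinner v y"
  proof (rule riesz_rep[where K=K])
    show "cnj (F (x + y)) = cnj (F x) + cnj (F y)" for x y by (simp add: add)
    show "cnj (F (c *\<^sub>C x)) = c * cnj (F x)" for c x by (simp add: sc)
    show "cmod (cnj (F x)) \<le> K * norm x" for x using bd[of x] by simp
  qed
  then obtain v where v: "\<And>y. cnj (F y) = cinner v y" by blast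
  show ?thesis
  proof (intro exI allI)
    fix y
    have "F y = cnj (cinner v y)" using v[of y] by (metis complex_cnj_cnj)
    then show "F y = cinner y v" by (metis cinner_conj)
  qed
qed

lemma adj_eig_zero:
  assumes A: "bounded_op A" and adj: "\<And>x y. cinner (A x) y = cinner x (S y)"
    and mu: "\<mu> \<notin> op_spectrum A" and w: "S w = cnj \<mu> *\<^sub>C w"
  shows "w = 0"
proof (rule cinner_eq_0I)
  fix x
  define z where "z = resolvent A \<mu> x"
  have x: "x = \<mu> *\<^sub>C z - A z" unfolding z_def using resolvent_props(3)[OF mu, of x] by (simp add: shift_op_def)
  have "cinner x w = cinner (\<mu> *\<^sub>C z) w - cinner (A z) w" unfolding x by (rule cinner_diff_left)
  also have "cinner (A z) w = cinner z (cnj \<mu> *\<^sub>C w)" by (simp add: adj w)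
  finally show "cinner x w = 0" by (simp add: cinner_scaleC_left cinner_scaleC_right)
qed

lemma weak_resolvent_eig:
  assumes A: "bounded_op A" and adj: "\<And>x y. cinner (A x) y = cinner x (S y)"
    and u: "S u = cnj l *\<^sub>C u" and mu: "\<mu> \<notin> op_spectrum A" and ne: "\<mu> \<noteq> l"
  shows "cinner u (resolvent A \<mu> x) = cinner u x / (\<mu> - l)"
proof -
  define v where "v = resolvent A \<mu> x"
  have x: "x = \<mu> *\<^sub>C v - A v" unfolding v_def using resolvent_props(3)[OF mu, of x] by (simp add: shift_op_def)
  have Av: "cinner u (A v) = l * cinner u v"
  proof -
    have "cinner u (A v) = cnj (cinner (A v) u)" by (rule cinner_conj)
    also have "cinner (A v) u = cinner v (cnj l *\<^sub>C u)" by (simp add: adj u)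
    also have "cnj \<dots> = l * cnj (cinner v u)" by (simp add: cinner_scaleC_right)
    also have "cnj (cinner v u) = cinner u v" by (metis cinner_conj)
    finally show ?thesis .
  qed
  have "cinner u x = (\<mu> - l) * cinner u v"
    unfolding x by (simp add: cinner_diff_right cinner_scaleC_right Av algebra_simps)
  then show ?thesis using ne unfolding v_def by (simp add: field_simps)
qed

lemma T_resolvent:
  assumes A: "bounded_op A" and mu: "\<mu> \<notin> op_spectrum A"
  shows "(A ^^ n) (resolvent A \<mu> x) - \<beta> *\<^sub>C resolvent A \<mu> x
     = (\<mu> ^ n - \<beta>) *\<^sub>C resolvent A \<mu> x - (\<Sum>j<n. \<mu> ^ (n - 1 - j) *\<^sub>C (A ^^ j) x)"
proof -
  define w where "w = resolvent A \<mu> x"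
  have x: "\<mu> *\<^sub>C w - A w = x" unfolding w_def using resolvent_props(3)[OF mu, of x] by (simp add: shift_op_def)
  have "(\<Sum>j<n. \<mu> ^ (n - 1 - j) *\<^sub>C (A ^^ j) x) = \<mu> ^ n *\<^sub>C w - (A ^^ n) w"
    using poly_factor[OF bounded_op_clin[OF A], where n=n and \<mu>=\<mu> and w=w] unfolding x .
  then show ?thesis unfolding w_def[symmetric] by (simp add: scaleC_diff_left algebra_simps)
qed

theorem corollary3p4:
  fixes A :: "'a::complex_hilbert \<Rightarrow> 'a" and n :: nat and l :: complex
  assumes "infinite_dimensional TYPE('a)"
    and "n > 1"
    and "bounded_op A"
    and "cadjoint A \<circ> (A ^^ n) = (A ^^ n) \<circ> cadjoint A"
    and "\<exists>\<theta> w. w < 2 * pi / real n \<and> op_spectrum A \<subseteq> angle_sector \<theta> w"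
    and "l \<noteq> 0"
    and "l \<in> op_spectrum A"
    and "\<not> l islimpt op_spectrum A"
  shows "\<forall>\<Gamma>. riesz_contour A l \<Gamma> \<longrightarrow> self_adjoint_op (riesz_projection A \<Gamma>)"
proof (intro allI impI)
  fix \<Gamma> assume rc: "riesz_contour A l \<Gamma>"
  have A: "bounded_op A" by (rule assms(3))
  have l0: "l \<noteq> 0" by (rule assms(6))
  have lS: "l \<in> op_spectrum A" by (rule assms(7))
  have n0: "n > 0" using assms(2) by simp
  have vp: "valid_path \<Gamma>" and loop: "pathfinish \<Gamma> = pathstart \<Gamma>"
    and disj: "path_image \<Gamma> \<inter> op_spectrum A = {}" and w1: "winding_number \<Gamma> l = 1"
    and w0: "\<And>z. z \<in> op_spectrum A - {l} \<Longrightarrow> winding_number \<Gamma> z = 0"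
    using rc unfolding riesz_contour_def by auto
  obtain \<theta> w where w: "w < 2 * pi / real n" and sec: "op_spectrum A \<subseteq> angle_sector \<theta> w"
    using assms(5) by blast
  obtain \<delta> where \<delta>: "\<delta> > 0" and iso: "\<And>z. z \<in> op_spectrum A \<Longrightarrow> z \<noteq> l \<Longrightarrow> \<delta> \<le> cmod (z - l)"
  proof -
    from assms(8) obtain e where e: "e > 0" "\<forall>x'\<in>op_spectrum A. x' \<noteq> l \<longrightarrow> \<not> dist x' l < e"
      unfolding islimpt_approachable by blast
    show ?thesis by (rule that[OF e(1)]) (use e(2) in \<open>auto simp: dist_norm not_less\<close>)
  qed
  have closedS: "closed (op_spectrum A)" by (rule closed_spectrum[OF A])
  have openR: "open (- op_spectrum A)" by (rule open_resolvent_set[OF A])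
  have pR: "path_image \<Gamma> \<subseteq> - op_spectrum A" using disj by blast
  have lP: "l \<notin> path_image \<Gamma>" using disj lS by blast
  have hol: "(\<lambda>\<mu>. cinner y (resolvent A \<mu> x)) holomorphic_on (- op_spectrum A)" for x y
    by (rule weak_resolvent_holomorphic[OF A])
  have circ: "contour_integral \<Gamma> g = contour_integral (circlepath l \<rho>) g"
    if "g holomorphic_on (- op_spectrum A)" "0 < \<rho>" "\<rho> < \<delta>" for g \<rho>
    by (rule contour_to_circle[OF closedS lS iso vp loop disj w1 w0 that])
  have sphR: "sphere l \<rho> \<subseteq> - op_spectrum A" if "0 < \<rho>" "\<rho> < \<delta>" for \<rho>
  proof
    fix z assume z: "z \<in> sphere l \<rho>"
    show "z \<in> - op_spectrum A"
    proof
      assume zS: "z \<in> op_spectrum A"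
      have "cmod (z - l) = \<rho>" using z by (simp add: dist_norm norm_minus_commute)
      moreover have "z \<noteq> l" using z that by auto
      ultimately show False using iso[OF zS] that by simp
    qed
  qed
  have intG: "g contour_integrable_on \<Gamma>" if "g holomorphic_on (- op_spectrum A)" for g
    by (rule contour_integrable_holomorphic_simple[OF that openR vp pR])
  have intC: "g contour_integrable_on (circlepath l \<rho>)"
    if "g holomorphic_on (- op_spectrum A)" "0 < \<rho>" "\<rho> < \<delta>" for g \<rho>
    by (rule contour_integrable_holomorphic_simple[OF that(1) openR valid_path_circlepath])
      (use sphR[OF that(2,3)] that(2) in simp)
  define F where "F x y = contour_integral \<Gamma> (\<lambda>\<mu>. cinner y (resolvent A \<mu> x)) / (2 * pi * \<i>)" for x y
  have Pw: "cinner y (riesz_projection A \<Gamma> x) = F x y" for x y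
  proof -
    define \<rho> where "\<rho> = \<delta> / 2"
    have \<rho>: "0 < \<rho>" "\<rho> < \<delta>" unfolding \<rho>_def using \<delta> by auto
    obtain M where M: "\<forall>\<mu>\<in>sphere l \<rho>. norm (resolvent A \<mu> x) \<le> M"
      using resolvent_bounded_on_compact[OF A compact_sphere sphR[OF \<rho>]] by blast
    define M' where "M' = max M 0"
    have "\<exists>v. \<forall>y. F x y = cinner y v"
    proof (rule weak_vector_exists)
      fix y1 y2
      have "contour_integral \<Gamma> (\<lambda>\<mu>. cinner (y1 + y2) (resolvent A \<mu> x))
          = contour_integral \<Gamma> (\<lambda>\<mu>. cinner y1 (resolvent A \<mu> x) + cinner y2 (resolvent A \<mu> x))"
        by (simp add: cinner_add_left)
      also have "\<dots> = contour_integral \<Gamma> (\<lambda>\<mu>. cinner y1 (resolvent A \<mu> x)) + contour_integral \<Gamma> (\<lambda>\<mu>. cinner y2 (resolvent A \<mu> x))"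
        by (rule contour_integral_add[OF intG[OF hol] intG[OF hol]])
      finally show "F x (y1 + y2) = F x y1 + F x y2" unfolding F_def by (simp add: add_divide_distrib)
    next
      fix c y
      have "contour_integral \<Gamma> (\<lambda>\<mu>. cinner (c *\<^sub>C y) (resolvent A \<mu> x))
          = contour_integral \<Gamma> (\<lambda>\<mu>. cnj c * cinner y (resolvent A \<mu> x))"
        by (simp add: cinner_scaleC_left)
      also have "\<dots> = cnj c * contour_integral \<Gamma> (\<lambda>\<mu>. cinner y (resolvent A \<mu> x))"
        by (rule contour_integral_lmul[OF intG[OF hol]])
      finally show "F x (c *\<^sub>C y) = cnj c * F x y" unfolding F_def by simp
    next
      fix y
      have "cmod (contour_integral (circlepath l \<rho>) (\<lambda>\<mu>. cinner y (resolvent A \<mu> x)))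
          \<le> (norm y * M') * (2 * pi * \<rho>)"
      proof (rule has_contour_integral_bound_circlepath[OF has_contour_integral_integral[OF intC[OF hol \<rho>]]])
        show "0 \<le> norm y * M'" unfolding M'_def by simp
        show "0 < \<rho>" by (rule \<rho>(1))
        fix \<mu> assume "cmod (\<mu> - l) = \<rho>"
        then have "\<mu> \<in> sphere l \<rho>" by (simp add: dist_norm norm_minus_commute)
        then have "norm (resolvent A \<mu> x) \<le> M'" using M unfolding M'_def by force
        then show "cmod (cinner y (resolvent A \<mu> x)) \<le> norm y * M'"
          using Cauchy_Schwarz_cinner[of y "resolvent A \<mu> x"] by (meson mult_left_mono norm_ge_zero order_trans)
      qed
      then have "cmod (contour_integral (circlepath l \<rho>) (\<lambda>\<mu>. cinner y (resolvent A \<mu> x))) / (2 * pi)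
          \<le> (norm y * M') * (2 * pi * \<rho>) / (2 * pi)" by (rule divide_right_mono) simp
      moreover have "cmod (F x y) = cmod (contour_integral (circlepath l \<rho>) (\<lambda>\<mu>. cinner y (resolvent A \<mu> x))) / (2 * pi)"
        unfolding F_def circ[OF hol \<rho>] by (simp add: norm_divide norm_mult)
      moreover have "(norm y * M') * (2 * pi * \<rho>) / (2 * pi) = (M' * \<rho>) * norm y" by simp
      ultimately show "cmod (F x y) \<le> (M' * \<rho>) * norm y" by simp
    qed
    then obtain v where v: "\<And>y. F x y = cinner y v" by blast
    have "riesz_projection A \<Gamma> x = v"
      unfolding riesz_projection_def
    proof (rule the_equality)
      show "\<forall>y. cinner y v = contour_integral \<Gamma> (\<lambda>\<mu>. cinner y (resolvent A \<mu> x)) / (2 * pi * \<i>)"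
        using v unfolding F_def by simp
      fix v' assume "\<forall>y. cinner y v' = contour_integral \<Gamma> (\<lambda>\<mu>. cinner y (resolvent A \<mu> x)) / (2 * pi * \<i>)"
      then show "v' = v" using v unfolding F_def by (intro cinner_ext) simp
    qed
    then show ?thesis using v by simp
  qed
  define P where "P = riesz_projection A \<Gamma>"
  define ad where "ad = cadjoint A"
  have adj: "cinner (A x) y = cinner x (ad y)" for x y unfolding ad_def by (rule cadjoint_prop[OF A])
  have adc: "clin ad" by (rule adjoint_clin[OF adj])
  have An: "clin (A ^^ n)" by (rule clin_funpow[OF bounded_op_clin[OF A]])
  have adn: "clin (ad ^^ n)" by (rule clin_funpow[OF adc])
  have adC: "cinner ((A ^^ n) x) y = cinner x ((ad ^^ n) y)" for x y by (rule adjoint_funpow[OF adj])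
  have comm1: "ad ((A ^^ n) x) = (A ^^ n) (ad x)" for x
    using fun_cong[OF assms(4), of x] unfolding ad_def by simp
  have comm2: "(ad ^^ n) ((A ^^ n) x) = (A ^^ n) ((ad ^^ n) x)" for x by (rule commute_funpow[where S=ad and T="A ^^ n", OF comm1])
  define \<beta> where "\<beta> = l ^ n"
  define T where "T x = (A ^^ n) x - \<beta> *\<^sub>C x" for x
  define T' where "T' x = (ad ^^ n) x - cnj \<beta> *\<^sub>C x" for x
  have adT: "cinner (T x) y = cinner x (T' y)" for x y
    unfolding T_def T'_def by (simp add: cinner_diff_left cinner_diff_right cinner_scaleC_left cinner_scaleC_right adC)
  have adT2: "cinner y (T x) = cinner (T' y) x" for x y by (metis adT cinner_conj)
  have commT: "T (T' x) = T' (T x)" for x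
    unfolding T_def T'_def
    by (simp add: clin_diff[OF An] clin_diff[OF adn] clin_scale[OF An] clin_scale[OF adn] comm2
        scaleC_diff_right scaleC_scaleC mult.commute algebra_simps)
  have Tc: "clin T" unfolding clin_def T_def
  proof (intro conjI allI)
    fix a b show "(A ^^ n) (a + b) - \<beta> *\<^sub>C (a + b) = (A ^^ n) a - \<beta> *\<^sub>C a + ((A ^^ n) b - \<beta> *\<^sub>C b)"
      by (simp add: clin_add[OF An] scaleC_add_right algebra_simps)
  next
    fix c a show "(A ^^ n) (c *\<^sub>C a) - \<beta> *\<^sub>C (c *\<^sub>C a) = c *\<^sub>C ((A ^^ n) a - \<beta> *\<^sub>C a)"
      by (simp add: clin_scale[OF An] scaleC_diff_right scaleC_scaleC mult.commute)
  qed
  have fixN: "cinner u (P x) = cinner u x" if Tu: "T u = 0" for u x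
  proof -
    have "norm (T' u) = norm (T u)" by (rule normal_norm_eq[OF adT commT])
    then have "T' u = 0" using Tu by simp
    then have Cu: "(ad ^^ n) u = (cnj l ^ n) *\<^sub>C u" unfolding T'_def \<beta>_def by simp
    have adu: "ad u = cnj l *\<^sub>C u"
    proof (rule eigen_from_power[OF adc n0 _ Cu])
      show "cnj l \<noteq> 0" using l0 by simp
      fix \<omega> w0 assume om: "\<omega> ^ n = cnj l ^ n" "\<omega> \<noteq> cnj l" "ad w0 = \<omega> *\<^sub>C w0"
      have notin: "cnj \<omega> \<notin> op_spectrum A"
      proof
        assume "cnj \<omega> \<in> op_spectrum A"
        moreover have "cnj \<omega> ^ n = l ^ n" using arg_cong[OF om(1), of cnj] by simp
        ultimately have "cnj \<omega> = l"
          using sector_root_unique[OF n0 w _ _ l0] sec lS by blast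
        then show False using om(2) by auto
      qed
      show "w0 = 0" by (rule adj_eig_zero[OF A adj notin]) (simp add: om(3))
    qed
    have "cinner u (P x) = F x u" unfolding P_def by (rule Pw)
    also have "F x u = contour_integral \<Gamma> (\<lambda>\<mu>. cinner u x * (1 / (\<mu> - l))) / (2 * pi * \<i>)"
      unfolding F_def
    proof (intro arg_cong[where f="\<lambda>z. z / (2 * pi * \<i>)"] contour_integral_eq)
      fix \<mu> assume "\<mu> \<in> path_image \<Gamma>"
      then have mu: "\<mu> \<notin> op_spectrum A" "\<mu> \<noteq> l" using pR lP by auto
      show "cinner u (resolvent A \<mu> x) = cinner u x * (1 / (\<mu> - l))"
        using weak_resolvent_eig[OF A adj adu mu] by simp
    qed
    also have "\<dots> = cinner u x * (contour_integral \<Gamma> (\<lambda>\<mu>. 1 / (\<mu> - l)) / (2 * pi * \<i>))"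
      using contour_integral_lmul[OF contour_integrable_inversediff[OF vp lP], of "cinner u x"] by simp
    also have "contour_integral \<Gamma> (\<lambda>\<mu>. 1 / (\<mu> - l)) / (2 * pi * \<i>) = winding_number \<Gamma> l"
      by (simp add: winding_number_valid_path[OF vp lP])
    finally show ?thesis using w1 by simp
  qed
  have kform: "cinner y ((T ^^ k) (P x)) =
      contour_integral \<Gamma> (\<lambda>\<mu>. (\<mu> ^ n - \<beta>) ^ k * cinner y (resolvent A \<mu> x)) / (2 * pi * \<i>)" for k x y
  proof (induction k arbitrary: y)
    case 0 then show ?case unfolding P_def by (simp add: Pw F_def)
  next
    case (Suc k)
    define q where "q \<mu> = (\<Sum>j<n. \<mu> ^ (n - 1 - j) * cinner y ((A ^^ j) x))" for \<mu>
    have "cinner y ((T ^^ Suc k) (P x)) = cinner (T' y) ((T ^^ k) (P x))" by (simp add: adT2)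
    also have "\<dots> = contour_integral \<Gamma> (\<lambda>\<mu>. (\<mu> ^ n - \<beta>) ^ k * cinner (T' y) (resolvent A \<mu> x)) / (2 * pi * \<i>)"
      by (rule Suc.IH)
    also have "contour_integral \<Gamma> (\<lambda>\<mu>. (\<mu> ^ n - \<beta>) ^ k * cinner (T' y) (resolvent A \<mu> x))
        = contour_integral \<Gamma> (\<lambda>\<mu>. (\<mu> ^ n - \<beta>) ^ Suc k * cinner y (resolvent A \<mu> x) - (\<mu> ^ n - \<beta>) ^ k * q \<mu>)"
    proof (rule contour_integral_eq)
      fix \<mu> assume "\<mu> \<in> path_image \<Gamma>"
      then have mu: "\<mu> \<notin> op_spectrum A" using pR by auto
      have "cinner (T' y) (resolvent A \<mu> x) = cinner y (T (resolvent A \<mu> x))" by (simp add: adT2)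
      also have "T (resolvent A \<mu> x) = (\<mu> ^ n - \<beta>) *\<^sub>C resolvent A \<mu> x - (\<Sum>j<n. \<mu> ^ (n - 1 - j) *\<^sub>C (A ^^ j) x)"
        unfolding T_def by (rule T_resolvent[OF A mu])
      also have "cinner y \<dots> = (\<mu> ^ n - \<beta>) * cinner y (resolvent A \<mu> x) - q \<mu>"
        unfolding q_def by (simp add: cinner_diff_right cinner_scaleC_right cinner_sum_right)
      finally have E: "cinner (T' y) (resolvent A \<mu> x) = (\<mu> ^ n - \<beta>) * cinner y (resolvent A \<mu> x) - q \<mu>" .
      show "(\<mu> ^ n - \<beta>) ^ k * cinner (T' y) (resolvent A \<mu> x)
          = (\<mu> ^ n - \<beta>) ^ Suc k * cinner y (resolvent A \<mu> x) - (\<mu> ^ n - \<beta>) ^ k * q \<mu>"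
        unfolding E power_Suc by (simp only: right_diff_distrib mult_ac)
    qed
    also have "\<dots> = contour_integral \<Gamma> (\<lambda>\<mu>. (\<mu> ^ n - \<beta>) ^ Suc k * cinner y (resolvent A \<mu> x))
        - contour_integral \<Gamma> (\<lambda>\<mu>. (\<mu> ^ n - \<beta>) ^ k * q \<mu>)"
    proof (rule contour_integral_diff)
      show "(\<lambda>\<mu>. (\<mu> ^ n - \<beta>) ^ Suc k * cinner y (resolvent A \<mu> x)) contour_integrable_on \<Gamma>"
        by (rule intG) (intro holomorphic_intros hol)
      have "((\<lambda>\<mu>. (\<mu> ^ n - \<beta>) ^ k * q \<mu>) has_contour_integral 0) \<Gamma>"
        by (rule Cauchy_theorem_global[of UNIV]) (auto simp: q_def vp loop intro!: holomorphic_intros)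
      then show "(\<lambda>\<mu>. (\<mu> ^ n - \<beta>) ^ k * q \<mu>) contour_integrable_on \<Gamma>"
        by (auto simp: contour_integrable_on_def)
    qed
    also have "contour_integral \<Gamma> (\<lambda>\<mu>. (\<mu> ^ n - \<beta>) ^ k * q \<mu>) = 0"
    proof (rule contour_integral_unique)
      show "((\<lambda>\<mu>. (\<mu> ^ n - \<beta>) ^ k * q \<mu>) has_contour_integral 0) \<Gamma>"
        by (rule Cauchy_theorem_global[of UNIV]) (auto simp: q_def vp loop intro!: holomorphic_intros)
    qed
    finally show ?case by simp
  qed
  have Tzero: "T (P x) = 0" for x
  proof (rule ccontr)
    define v where "v = P x"
    assume "T (P x) \<noteq> 0"
    then have ne: "T v \<noteq> 0" unfolding v_def .
    have v0: "v \<noteq> 0" using ne clin_zero[OF Tc] by auto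
    define r where "r = norm (T v) / norm v"
    have r: "r > 0" unfolding r_def using ne v0 by simp
    have "isCont (\<lambda>\<mu>::complex. \<mu> ^ n) l" by simp
    then obtain d where d: "d > 0" "\<And>\<mu>. \<mu> \<noteq> l \<and> norm (\<mu> - l) < d \<longrightarrow> norm (\<mu> ^ n - l ^ n) < r / 2"
    proof -
      have "(\<lambda>\<mu>::complex. \<mu> ^ n) \<midarrow>l\<rightarrow> l ^ n" using \<open>isCont (\<lambda>\<mu>::complex. \<mu> ^ n) l\<close> by (simp add: isCont_def)
      from LIM_D[OF this, of "r / 2"] r
      obtain s where "s > 0" "\<forall>\<mu>. \<mu> \<noteq> l \<and> norm (\<mu> - l) < s \<longrightarrow> norm (\<mu> ^ n - l ^ n) < r / 2" by auto
      then show ?thesis using that by blast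
    qed
    define \<rho> where "\<rho> = min (\<delta> / 2) (d / 2)"
    have \<rho>: "0 < \<rho>" "\<rho> < \<delta>" "\<rho> < d" unfolding \<rho>_def using \<delta> d by auto
    obtain M where M: "\<forall>\<mu>\<in>sphere l \<rho>. norm (resolvent A \<mu> x) \<le> M"
      using resolvent_bounded_on_compact[OF A compact_sphere sphR[OF \<rho>(1,2)]] by blast
    define M' where "M' = max M 0"
    have M'0: "M' \<ge> 0" unfolding M'_def by simp
    have bound: "norm ((T ^^ k) v) \<le> \<rho> * M' * (r / 2) ^ k" for k
    proof -
      define z where "z = (T ^^ k) v"
      define g where "g \<mu> = (\<mu> ^ n - \<beta>) ^ k * cinner z (resolvent A \<mu> x)" for \<mu>
      have gh: "g holomorphic_on (- op_spectrum A)" unfolding g_def by (intro holomorphic_intros hol)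
      have zz: "cinner z z = contour_integral (circlepath l \<rho>) g / (2 * pi * \<i>)"
        using kform[where k=k and x=x and y=z] circ[OF gh \<rho>(1,2)] unfolding z_def v_def g_def by simp
      have "cmod (contour_integral (circlepath l \<rho>) g) \<le> ((r / 2) ^ k * (norm z * M')) * (2 * pi * \<rho>)"
      proof (rule has_contour_integral_bound_circlepath[OF has_contour_integral_integral[OF intC[OF gh \<rho>(1,2)]]])
        show "0 \<le> (r / 2) ^ k * (norm z * M')" using r M'0 by simp
        show "0 < \<rho>" by (rule \<rho>(1))
        fix \<mu> assume mu: "cmod (\<mu> - l) = \<rho>"
        then have "\<mu> \<in> sphere l \<rho>" by (simp add: dist_norm norm_minus_commute)
        then have R: "norm (resolvent A \<mu> x) \<le> M'" using M unfolding M'_def by force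
        have "cmod (\<mu> ^ n - \<beta>) \<le> r / 2"
        proof (cases "\<mu> = l")
          case True then show ?thesis using r by (simp add: \<beta>_def)
        next
          case False then show ?thesis using d(2)[of \<mu>] mu \<rho>(3) by (simp add: \<beta>_def)
        qed
        then have p: "cmod ((\<mu> ^ n - \<beta>) ^ k) \<le> (r / 2) ^ k" by (simp add: norm_power power_mono)
        have c: "cmod (cinner z (resolvent A \<mu> x)) \<le> norm z * M'"
          using Cauchy_Schwarz_cinner[of z "resolvent A \<mu> x"] R by (meson mult_left_mono norm_ge_zero order_trans)
        show "cmod (g \<mu>) \<le> (r / 2) ^ k * (norm z * M')"
          unfolding g_def norm_mult by (rule mult_mono[OF p c]) (use r in auto)
      qed
      then have "cmod (contour_integral (circlepath l \<rho>) g) / (2 * pi)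
          \<le> ((r / 2) ^ k * (norm z * M')) * (2 * pi * \<rho>) / (2 * pi)" by (rule divide_right_mono) simp
      moreover have "cmod (cinner z z) = cmod (contour_integral (circlepath l \<rho>) g) / (2 * pi)"
        unfolding zz by (simp add: norm_divide norm_mult)
      ultimately have "cmod (cinner z z) \<le> ((r / 2) ^ k * (norm z * M')) * (2 * pi * \<rho>) / (2 * pi)" by simp
      moreover have "cmod (cinner z z) = (norm z)\<^sup>2" by (simp add: cinner_self_real norm_power)
      ultimately have "(norm z)\<^sup>2 \<le> ((r / 2) ^ k * (norm z * M')) * (2 * pi * \<rho>) / (2 * pi)" by simp
      also have "\<dots> = (\<rho> * M' * (r / 2) ^ k) * norm z" by (simp add: field_simps)
      finally have "(norm z)\<^sup>2 \<le> (\<rho> * M' * (r / 2) ^ k) * norm z" .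
      then have "norm z \<le> \<rho> * M' * (r / 2) ^ k"
        by (cases "norm z = 0") (use \<rho> M'0 r in \<open>auto simp: power2_eq_square mult_le_cancel_right\<close>)
      then show ?thesis unfolding z_def .
    qed
    have grow: "r ^ k * norm v \<le> norm ((T ^^ k) v)" for k
      unfolding r_def by (rule normal_growth[OF adT commT ne v0])
    obtain k where k: "\<rho> * M' / norm v < 2 ^ k" using real_arch_pow[of 2 "\<rho> * M' / norm v"] by auto
    have "r ^ k * norm v \<le> \<rho> * M' * (r / 2) ^ k" using grow[of k] bound[of k] by linarith
    then have "(2 ^ k * (r / 2) ^ k) * norm v \<le> (\<rho> * M') * (r / 2) ^ k"
      by (simp add: power_mult_distrib[symmetric])
    then have "2 ^ k * norm v \<le> \<rho> * M'"
      using r by (simp add: mult.commute mult.left_commute mult_le_cancel_left_pos)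
    then show False using k v0 by (simp add: field_simps)
  qed
  show "self_adjoint_op (riesz_projection A \<Gamma>)"
    unfolding self_adjoint_op_def P_def[symmetric]
  proof (intro allI)
    fix x y
    have a: "cinner (P x) (P y) = cinner (P x) y" by (rule fixN[OF Tzero])
    have b: "cinner (P y) (P x) = cinner (P y) x" by (rule fixN[OF Tzero])
    have "cinner (P x) y = cnj (cinner (P y) (P x))" using a by (metis cinner_conj)
    also have "\<dots> = cinner x (P y)" using b by (metis cinner_conj)
    finally show "cinner (P x) y = cinner x (P y)" .
  qed
qed

end
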